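(* Let $G=(V,E)$ be a finite, connected, bipartite cubic graph and let $n>0$. Then the transition matrix $P_{G,n}$ on $\mathcal R(G)$ (defined in the context) is ergodic, i.e. for all $s,s'\in\mathcal R(G)$ the chain started at $s$ visits $s'$ with positive probability.
   Context: Let $G=(V,E)$ be a finite, connected, bipartite cubic (3-regular) graph and $n>0$. For $A\subseteq E$ and $w\in V$ let $d_w(A)$ be the number of edges of $A$ incident to $w$, and let $\partial A$ be the set of vertices $w$ with $d_w(A)$ odd. Let $\mathcal R(G)$ be the set of ordered triples $(A,u,v)$ with $A\subseteq E$, $u,v\in V$, such that $\partial A=\{u,v\}$ if $u\ne v$ and $\partial A=\emptyset$ if $u=v$, $d_w(A)\ge1$ for all $w\in V$, and $d_u(A)+d_v(A)\ge4$. For $(A,u,v)\in\mathcal R(G)$ let $C_{uv}(A)$ be the connected component of $(V,A)$ containing $u$ (and $v$). Partition $\mathcal R(G)$ into: $\mathcal E$, the states where $C_{uv}(A)$ is a cycle (equivalently $u=v$); $\mathcal T$, where $C_{uv}(A)$ is a tadpole graph (a cycle with a path attached at one of its endpoints; equivalently $\{d_u(A),d_v(A)\}=\{1,3\}$); $\Theta$, where $C_{uv}(A)$ is a theta graph (two degree-3 vertices joined by three internally vertex-disjoint paths); $\mathcal D$, where $C_{uv}(A)$ is a dumbbell graph (two vertex-disjoint cycles joined by a path of length $\ge1$). An edge of $A$ is a bridge if deleting it from $(V,A)$ increases the number of connected components. $\triangle$ denotes symmetric difference. The Markov chain $P_{G,n}$ on $\mathcal R(G)$ is defined as follows: from the state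 $(A,u,v)$, for each edge $e=uu'\in E$ incident to $u$ it moves to $(A\triangle e,u',v)$, and for each edge $e=vv'\in E$ incident to $v$ it moves to $(A\triangle e,u,v')$, where such a move (along edge $e$ incident to the moved defect) has probability $1/2$ if $(A,u,v)\in\mathcal E\cup\mathcal T$ and $e\notin A$; $1/6$ if $(A,u,v)\in\Theta$; $n/(2(n+2))$ if $(A,u,v)\in\mathcal D$ and $e$ is a bridge of $(V,A)$; $1/(2(n+2))$ if $(A,u,v)\in\mathcal D$ and $e\in A$ is not a bridge; and $0$ otherwise. (If $u=v$, the two moves along the unique edge $e\notin A$ at $u$ lead to the distinct states $(A\cup e,u',u)$ and $(A\cup e,u,u')$.) All other transitions, including all identity transitions, have probability $0$. "Ergodic" means irreducible. *)

theory Defs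
  imports Complex_Main
begin

definition simple_graph :: "'a set \<Rightarrow> 'a set set \<Rightarrow> bool" where
  "simple_graph V E \<longleftrightarrow> finite V \<and>
     (\<forall>e\<in>E. \<exists>x y. x \<in> V \<and> y \<in> V \<and> x \<noteq> y \<and> e = {x, y})"

definition incident :: "'a set set \<Rightarrow> 'a \<Rightarrow> 'a set set" where
  "incident F w = {e \<in> F. w \<in> e}"

definition deg :: "'a set set \<Rightarrow> 'a \<Rightarrow> nat" where
  "deg F w = card (incident F w)"

definition cubic :: "'a set \<Rightarrow> 'a set set \<Rightarrow> bool" where
  "cubic V E \<longleftrightarrow> (\<forall>w\<in>V. deg E w = 3)"

definition adj_rel :: "'a set set \<Rightarrow> ('a \<times> 'a) set" where
  "adj_rel F = {(x, y). {x, y} \<in> F}"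

definition connected_graph :: "'a set \<Rightarrow> 'a set set \<Rightarrow> bool" where
  "connected_graph V E \<longleftrightarrow> V \<noteq> {} \<and> (\<forall>x\<in>V. \<forall>y\<in>V. (x, y) \<in> (adj_rel E)\<^sup>*)"

definition bipartite :: "'a set \<Rightarrow> 'a set set \<Rightarrow> bool" where
  "bipartite V E \<longleftrightarrow> (\<exists>X. X \<subseteq> V \<and> (\<forall>e\<in>E. card (e \<inter> X) = 1))"

definition comp_verts :: "'a set set \<Rightarrow> 'a \<Rightarrow> 'a set" where
  "comp_verts A u = {w. (u, w) \<in> (adj_rel A)\<^sup>*}"

definition comp_edges :: "'a set set \<Rightarrow> 'a \<Rightarrow> 'a set set" where
  "comp_edges A u = {e \<in> A. e \<subseteq> comp_verts A u}"

definition num_components :: "'a set \<Rightarrow> 'a set set \<Rightarrow> nat" where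
  "num_components V A = card ((\<lambda>w. comp_verts A w) ` V)"

definition is_bridge :: "'a set \<Rightarrow> 'a set set \<Rightarrow> 'a set \<Rightarrow> bool" where
  "is_bridge V A e \<longleftrightarrow> e \<in> A \<and> num_components V (A - {e}) > num_components V A"

definition odd_set :: "'a set \<Rightarrow> 'a set set \<Rightarrow> 'a set" where
  "odd_set V A = {w \<in> V. odd (deg A w)}"

definition path_edges :: "'a list \<Rightarrow> 'a set set" where
  "path_edges xs = {{xs ! i, xs ! Suc i} | i. Suc i < length xs}"

definition is_path :: "'a set set \<Rightarrow> 'a list \<Rightarrow> bool" where
  "is_path F xs \<longleftrightarrow> xs \<noteq> [] \<and> distinct xs \<and> path_edges xs \<subseteq> F"

definition cycle_edges :: "'a list \<Rightarrow> 'a set set" where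
  "cycle_edges xs = insert {last xs, hd xs} (path_edges xs)"

definition is_cycle :: "'a set set \<Rightarrow> 'a list \<Rightarrow> bool" where
  "is_cycle F xs \<longleftrightarrow> length xs \<ge> 3 \<and> distinct xs \<and> cycle_edges xs \<subseteq> F"

definition cycle_graph :: "'a set \<Rightarrow> 'a set set \<Rightarrow> bool" where
  "cycle_graph W F \<longleftrightarrow> (\<exists>c. is_cycle F c \<and> W = set c \<and> F = cycle_edges c)"

definition tadpole_graph :: "'a set \<Rightarrow> 'a set set \<Rightarrow> bool" where
  "tadpole_graph W F \<longleftrightarrow> (\<exists>c p. is_cycle F c \<and> is_path F p \<and> length p \<ge> 2 \<and>
      set p \<inter> set c = {hd p} \<and>
      W = set c \<union> set p \<and> F = cycle_edges c \<union> path_edges p)"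

definition theta_graph :: "'a set \<Rightarrow> 'a set set \<Rightarrow> bool" where
  "theta_graph W F \<longleftrightarrow> (\<exists>x y p1 p2 p3. x \<noteq> y \<and>
      is_path F p1 \<and> is_path F p2 \<and> is_path F p3 \<and>
      hd p1 = x \<and> hd p2 = x \<and> hd p3 = x \<and> last p1 = y \<and> last p2 = y \<and> last p3 = y \<and>
      p1 \<noteq> p2 \<and> p1 \<noteq> p3 \<and> p2 \<noteq> p3 \<and>
      set p1 \<inter> set p2 = {x, y} \<and> set p1 \<inter> set p3 = {x, y} \<and> set p2 \<inter> set p3 = {x, y} \<and>
      W = set p1 \<union> set p2 \<union> set p3 \<and>
      F = path_edges p1 \<union> path_edges p2 \<union> path_edges p3)"

definition dumbbell_graph :: "'a set \<Rightarrow> 'a set set \<Rightarrow> bool" where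
  "dumbbell_graph W F \<longleftrightarrow> (\<exists>c1 c2 p. is_cycle F c1 \<and> is_cycle F c2 \<and> set c1 \<inter> set c2 = {} \<and>
      is_path F p \<and> length p \<ge> 2 \<and>
      set p \<inter> set c1 = {hd p} \<and> set p \<inter> set c2 = {last p} \<and>
      W = set c1 \<union> set c2 \<union> set p \<and>
      F = cycle_edges c1 \<union> cycle_edges c2 \<union> path_edges p)"

type_synonym 'a state = "'a set set \<times> 'a \<times> 'a"

definition states :: "'a set \<Rightarrow> 'a set set \<Rightarrow> 'a state set" where
  "states V E = {(A, u, v). A \<subseteq> E \<and> u \<in> V \<and> v \<in> V \<and>
     (if u \<noteq> v then odd_set V A = {u, v} else odd_set V A = {}) \<and>
     (\<forall>w\<in>V. deg A w \<ge> 1) \<and> deg A u + deg A v \<ge> 4}"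

definition class_E :: "'a set \<Rightarrow> 'a set set \<Rightarrow> 'a state set" where
  "class_E V E = {(A, u, v) \<in> states V E. cycle_graph (comp_verts A u) (comp_edges A u)}"

definition class_T :: "'a set \<Rightarrow> 'a set set \<Rightarrow> 'a state set" where
  "class_T V E = {(A, u, v) \<in> states V E. tadpole_graph (comp_verts A u) (comp_edges A u)}"

definition class_Theta :: "'a set \<Rightarrow> 'a set set \<Rightarrow> 'a state set" where
  "class_Theta V E = {(A, u, v) \<in> states V E. theta_graph (comp_verts A u) (comp_edges A u)}"

definition class_D :: "'a set \<Rightarrow> 'a set set \<Rightarrow> 'a state set" where
  "class_D V E = {(A, u, v) \<in> states V E. dumbbell_graph (comp_verts A u) (comp_edges A u)}"

definition sym_diff :: "'b set \<Rightarrow> 'b set \<Rightarrow> 'b set" where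
  "sym_diff X Y = (X - Y) \<union> (Y - X)"

text \<open>Probability of a move along edge e (incident to the moved defect) from state s.\<close>
definition move_prob :: "'a set \<Rightarrow> 'a set set \<Rightarrow> real \<Rightarrow> 'a state \<Rightarrow> 'a set \<Rightarrow> real" where
  "move_prob V E n s e =
     (case s of (A, u, v) \<Rightarrow>
       if s \<in> class_E V E \<union> class_T V E then (if e \<notin> A then 1/2 else 0)
       else if s \<in> class_Theta V E then 1/6
       else if s \<in> class_D V E then
         (if e \<in> A \<and> is_bridge V A e then n / (2 * (n + 2))
          else if e \<in> A then 1 / (2 * (n + 2)) else 0)
       else 0)"

definition trans_prob :: "'a set \<Rightarrow> 'a set set \<Rightarrow> real \<Rightarrow> 'a state \<Rightarrow> 'a state \<Rightarrow> real" where
  "trans_prob V E n s s' =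
     (case s of (A, u, v) \<Rightarrow>
       (\<Sum>u'\<in>{u'. {u, u'} \<in> E}.
          if s' = (sym_diff A {{u, u'}}, u', v) then move_prob V E n s {u, u'} else 0)
     + (\<Sum>v'\<in>{v'. {v, v'} \<in> E}.
          if s' = (sym_diff A {{v, v'}}, u, v') then move_prob V E n s {v, v'} else 0))"

definition irreducible_chain :: "'s set \<Rightarrow> ('s \<Rightarrow> 's \<Rightarrow> real) \<Rightarrow> bool" where
  "irreducible_chain S P \<longleftrightarrow>
     (\<forall>s\<in>S. \<forall>s'\<in>S. (s, s') \<in> {(x, y). x \<in> S \<and> y \<in> S \<and> P x y > 0}\<^sup>*)"

end

theory Submission
  imports Defs "HOL-Library.Transitive_Closure_Table"
begin


lemma incident_mono: "F \<subseteq> G \<Longrightarrow> incident F x \<subseteq> incident G x"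
  unfolding incident_def by auto

lemma finite_incident: "finite F \<Longrightarrow> finite (incident F x)"
  unfolding incident_def by auto

lemma incident_insert: "incident (insert e F) x = (if x \<in> e then insert e (incident F x) else incident F x)"
  unfolding incident_def by auto

lemma incident_Diff: "incident (F - D) x = incident F x - D"
  unfolding incident_def by auto

lemma deg_insert: "finite F \<Longrightarrow> e \<notin> F \<Longrightarrow> deg (insert e F) x = (if x \<in> e then Suc (deg F x) else deg F x)"
  unfolding deg_def incident_insert by (auto simp: finite_incident incident_def)

lemma deg_remove: "finite F \<Longrightarrow> e \<in> F \<Longrightarrow> deg (F - {e}) x = (if x \<in> e then deg F x - 1 else deg F x)"
  unfolding deg_def incident_Diff by (auto simp: finite_incident incident_def)

lemma deg_mono: "finite G \<Longrightarrow> F \<subseteq> G \<Longrightarrow> deg F x \<le> deg G x"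
  unfolding deg_def by (intro card_mono finite_incident incident_mono) auto

lemma card2_eq: "finite S \<Longrightarrow> card S = 2 \<Longrightarrow> a \<in> S \<Longrightarrow> b \<in> S \<Longrightarrow> a \<noteq> b \<Longrightarrow> S = {a,b}"
proof -
  assume h: "finite S" "card S = 2" "a \<in> S" "b \<in> S" "a \<noteq> b"
  have "{a,b} \<subseteq> S" using h by auto
  moreover have "card {a,b} = card S" using h by auto
  ultimately show ?thesis using h card_subset_eq by metis
qed

lemma card3_eq: "finite S \<Longrightarrow> card S = 3 \<Longrightarrow> a \<in> S \<Longrightarrow> b \<in> S \<Longrightarrow> c \<in> S \<Longrightarrow> a \<noteq> b \<Longrightarrow> a \<noteq> c \<Longrightarrow> b \<noteq> c \<Longrightarrow> S = {a,b,c}"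
proof -
  assume h: "finite S" "card S = 3" "a \<in> S" "b \<in> S" "c \<in> S" "a \<noteq> b" "a \<noteq> c" "b \<noteq> c"
  have "{a,b,c} \<subseteq> S" using h by auto
  moreover have "card {a,b,c} = card S" using h by auto
  ultimately show ?thesis using h card_subset_eq by metis
qed

lemma card1_eq: "finite S \<Longrightarrow> card S = 1 \<Longrightarrow> a \<in> S \<Longrightarrow> b \<in> S \<Longrightarrow> a = b"
  by (metis card_1_singletonE singletonD)

lemma path_edges_Nil[simp]: "path_edges [] = {}" unfolding path_edges_def by auto
lemma path_edges_single[simp]: "path_edges [x] = {}" unfolding path_edges_def by auto

lemma path_edges_Cons: "xs \<noteq> [] \<Longrightarrow> path_edges (x # xs) = insert {x, hd xs} (path_edges xs)"
proof -
  assume ne: "xs \<noteq> []"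
  show ?thesis
  proof (rule set_eqI, rule iffI)
    fix e assume "e \<in> path_edges (x # xs)"
    then obtain i where i: "e = {(x#xs) ! i, (x#xs) ! Suc i}" "Suc i < length (x#xs)" unfolding path_edges_def by auto
    show "e \<in> insert {x, hd xs} (path_edges xs)"
    proof (cases i)
      case 0 then show ?thesis using i ne by (simp add: hd_conv_nth)
    next
      case (Suc j) then show ?thesis using i unfolding path_edges_def by auto
    qed
  next
    fix e assume "e \<in> insert {x, hd xs} (path_edges xs)"
    then show "e \<in> path_edges (x # xs)"
    proof
      assume "e = {x, hd xs}"
      then have "e = {(x#xs) ! 0, (x#xs) ! Suc 0}" using ne by (simp add: hd_conv_nth)
      then show ?thesis unfolding path_edges_def using ne by force
    next
      assume "e \<in> path_edges xs"
      then obtain i where "e = {xs ! i, xs ! Suc i}" "Suc i < length xs" unfolding path_edges_def by auto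
      then have "e = {(x#xs) ! Suc i, (x#xs) ! Suc (Suc i)}" "Suc (Suc i) < length (x#xs)" by auto
      then show ?thesis unfolding path_edges_def by blast
    qed
  qed
qed

lemma path_edges_subset: "e \<in> path_edges xs \<Longrightarrow> e \<subseteq> set xs"
  unfolding path_edges_def by auto

lemma path_edges_two: "e \<in> path_edges xs \<Longrightarrow> \<exists>i. Suc i < length xs \<and> e = {xs!i, xs!Suc i}"
  unfolding path_edges_def by auto

lemma path_edges_rev: "path_edges (rev xs) = path_edges xs"
proof -
  have 1: "path_edges (rev xs) \<subseteq> path_edges xs" for xs :: "'a list"
  proof
    fix e assume "e \<in> path_edges (rev xs)"
    then obtain i where i: "Suc i < length xs" "e = {rev xs ! i, rev xs ! Suc i}" unfolding path_edges_def by auto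
    define j where "j = length xs - Suc (Suc i)"
    have "rev xs ! i = xs ! Suc j" "rev xs ! Suc i = xs ! j" using i by (auto simp: rev_nth j_def Suc_diff_Suc)
    then have "e = {xs ! j, xs ! Suc j}" "Suc j < length xs" using i by (auto simp: j_def)
    then show "e \<in> path_edges xs" unfolding path_edges_def by blast
  qed
  show ?thesis using 1[of xs] 1[of "rev xs"] by auto
qed

lemma path_edge_mem_nth:
  assumes "distinct xs" "{x, xs!j} \<in> path_edges xs" "j < length xs" "x \<noteq> xs!j"
  shows "(j > 0 \<and> x = xs!(j-1)) \<or> (Suc j < length xs \<and> x = xs!Suc j)"
proof -
  obtain i where i: "Suc i < length xs" "{x, xs!j} = {xs!i, xs!Suc i}" using path_edges_two[OF assms(2)] by auto
  show ?thesis
  proof (cases "xs!j = xs!i")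
    case True
    then have "i = j" using assms i nth_eq_iff_index_eq by (metis Suc_lessD)
    then show ?thesis using i assms by (auto simp: doubleton_eq_iff)
  next
    case False
    then have "xs!j = xs!Suc i" "x = xs!i" using i by (auto simp: doubleton_eq_iff)
    then have "j = Suc i" using assms i nth_eq_iff_index_eq by metis
    then show ?thesis using \<open>x = xs!i\<close> by auto
  qed
qed

lemma path_reach:
  assumes "path_edges xs \<subseteq> L" "i < length xs"
  shows "(xs!0, xs!i) \<in> (adj_rel L)\<^sup>*"
  using assms(2)
proof (induction i)
  case 0 then show ?case by simp
next
  case (Suc i)
  then have "{xs!i, xs!Suc i} \<in> L" using assms(1) unfolding path_edges_def by blast
  then have "(xs!i, xs!Suc i) \<in> adj_rel L" unfolding adj_rel_def by auto
  then show ?case using Suc by (meson Suc_lessD rtrancl.rtrancl_into_rtrancl)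
qed

lemma adj_rel_sym: "(x,y) \<in> adj_rel F \<Longrightarrow> (y,x) \<in> adj_rel F"
  unfolding adj_rel_def by (auto simp: insert_commute)

lemma adj_rtrancl_sym: "(x,y) \<in> (adj_rel F)\<^sup>* \<Longrightarrow> (y,x) \<in> (adj_rel F)\<^sup>*"
proof (induction rule: rtrancl_induct)
  case base then show ?case by simp
next
  case (step y z) then show ?case using adj_rel_sym by (meson converse_rtrancl_into_rtrancl)
qed

lemma adj_rtrancl_mono: "F \<subseteq> G \<Longrightarrow> (x,y) \<in> (adj_rel F)\<^sup>* \<Longrightarrow> (x,y) \<in> (adj_rel G)\<^sup>*"
proof -
  assume "F \<subseteq> G" "(x,y) \<in> (adj_rel F)\<^sup>*"
  moreover have "adj_rel F \<subseteq> adj_rel G" using \<open>F \<subseteq> G\<close> unfolding adj_rel_def by auto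
  ultimately show ?thesis using rtrancl_mono by blast
qed


definition edges2 :: "'a set set \<Rightarrow> bool" where
  "edges2 F \<longleftrightarrow> (\<forall>e\<in>F. \<exists>x y. x \<noteq> y \<and> e = {x, y})"

lemma edges2_subset: "edges2 G \<Longrightarrow> F \<subseteq> G \<Longrightarrow> edges2 F"
  unfolding edges2_def by auto

lemma path_vertex_in_edge:
  assumes "2 \<le> length p" "x \<in> set p"
  shows "\<exists>e\<in>path_edges p. x \<in> e"
proof -
  obtain i where i: "i < length p" "p!i = x" using assms by (auto simp: in_set_conv_nth)
  show ?thesis
  proof (cases "Suc i < length p")
    case True
    then show ?thesis using i unfolding path_edges_def by blast
  next
    case False
    then have "i = Suc (i - 1)" "Suc (i-1) < length p" using i assms by auto
    then have "{p!(i-1), p!i} \<in> path_edges p" unfolding path_edges_def by (metis (mono_tags, lifting) mem_Collect_eq)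
    then show ?thesis using i by auto
  qed
qed

lemma deg1_edge:
  assumes "deg F a = 1" "edges2 F" "finite F"
  obtains w where "incident F a = {{a,w}}" "a \<noteq> w" "{a,w} \<in> F"
proof -
  obtain e where e: "incident F a = {e}" using assms unfolding deg_def by (auto simp: card_1_singleton_iff)
  then have "e \<in> F" "a \<in> e" unfolding incident_def by auto
  then obtain x y where "x \<noteq> y" "e = {x,y}" using assms unfolding edges2_def by auto
  then obtain w where "e = {a,w}" "a \<noteq> w" using \<open>a \<in> e\<close> by auto
  then show ?thesis using that e \<open>e \<in> F\<close> by auto
qed

definition walkprop :: "'a set set \<Rightarrow> 'a set \<Rightarrow> 'a \<Rightarrow> 'a list \<Rightarrow> bool" where
  "walkprop F T a p \<longleftrightarrow> distinct p \<and> 2 \<le> length p \<and> hd p = a \<and> path_edges p \<subseteq> F \<and>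
     (last p \<in> T \<or> deg F (last p) \<noteq> 2) \<and>
     (\<forall>i. 0 < i \<and> i < length p - 1 \<longrightarrow> p!i \<notin> T \<and> deg F (p!i) = 2) \<and>
     (\<forall>i < length p - 1. incident F (p!i) \<subseteq> path_edges p)"

lemma walk_exists:
  assumes "finite F" "edges2 F" "deg F a = 1"
  shows "\<exists>p. walkprop F T a p"
  using assms
proof (induction "card F" arbitrary: F a rule: less_induct)
  case less
  obtain w where w: "incident F a = {{a,w}}" "a \<noteq> w" "{a,w} \<in> F" using deg1_edge less.prems by metis
  have pe2: "path_edges [a,w] = {{a,w}}" by (simp add: path_edges_Cons)
  show ?case
  proof (cases "w \<in> T \<or> deg F w \<noteq> 2")
    case True
    have "walkprop F T a [a,w]" unfolding walkprop_def using True w pe2 by auto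
    then show ?thesis by blast
  next
    case False
    define F' where "F' = F - {{a,w}}"
    have fin': "finite F'" "edges2 F'" using less.prems unfolding F'_def edges2_def by auto
    have cardlt: "card F' < card F" unfolding F'_def using w less.prems by (metis card_Diff1_less)
    have dw: "deg F' w = 1" unfolding F'_def using deg_remove[OF less.prems(1) w(3)] False by auto
    obtain p' where p': "walkprop F' T w p'" using less.hyps[OF cardlt fin' dw] by blast
    have p'1: "distinct p'" "2 \<le> length p'" "hd p' = w" "path_edges p' \<subseteq> F'"
      "last p' \<in> T \<or> deg F' (last p') \<noteq> 2"
      "\<And>i. 0 < i \<Longrightarrow> i < length p' - 1 \<Longrightarrow> p'!i \<notin> T \<and> deg F' (p'!i) = 2"
      "\<And>i. i < length p' - 1 \<Longrightarrow> incident F' (p'!i) \<subseteq> path_edges p'"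
      using p' unfolding walkprop_def by auto
    have inc'a: "incident F' a = {}" unfolding F'_def incident_Diff using w by auto
    have anot: "a \<notin> set p'"
    proof
      assume "a \<in> set p'"
      then obtain e where "e \<in> path_edges p'" "a \<in> e" using path_vertex_in_edge p'1 by metis
      then have "e \<in> incident F' a" using p'1(4) unfolding incident_def by auto
      then show False using inc'a by auto
    qed
    have ne: "p' \<noteq> []" using p'1 by auto
    define p where "p = a # p'"
    have pe: "path_edges p = insert {a,w} (path_edges p')" unfolding p_def using path_edges_Cons[OF ne] p'1 by simp
    have lastne: "last p' \<noteq> w"
    proof
      assume "last p' = w"
      then have "p' ! (length p' - 1) = p' ! 0" using ne p'1 by (simp add: last_conv_nth hd_conv_nth)
      moreover have "length p' - 1 < length p'" "0 < length p'" "length p' - 1 \<noteq> 0" using p'1 by auto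
      ultimately show False using nth_eq_iff_index_eq[OF p'1(1), of "length p' - 1" 0] by simp
    qed
    have lastna: "last p' \<noteq> a" using anot ne by auto
    have degeq: "x \<notin> {a,w} \<Longrightarrow> deg F x = deg F' x" for x
      unfolding F'_def using deg_remove[OF less.prems(1) w(3)] by auto
    have incsub: "incident F x \<subseteq> insert {a,w} (incident F' x)" for x
      unfolding F'_def incident_Diff by auto
    have c1: "distinct p" using anot p'1 p_def by auto
    have c2: "2 \<le> length p" using p'1 p_def by auto
    have c3: "hd p = a" using p_def by auto
    have c4: "path_edges p \<subseteq> F" using pe p'1 w unfolding F'_def by auto
    have c5: "last p \<in> T \<or> deg F (last p) \<noteq> 2" using p'1(5) degeq[of "last p'"] lastne lastna ne p_def by auto
    have c6: "p ! i \<notin> T \<and> deg F (p ! i) = 2" if i: "0 < i" "i < length p - 1" for i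
    proof (cases "i = 1")
      case True
      then have "p!i = w" using p_def p'1 ne by (simp add: hd_conv_nth)
      then show ?thesis using False by auto
    next
      case False
      then obtain j where j: "i = Suc j" "0 < j" "j < length p' - 1" using i p_def by (cases i) auto
      have pij: "p!i = p'!j" using j p_def by auto
      have jl: "j < length p'" using j by auto
      have "p'!j \<noteq> a" using anot jl nth_mem by metis
      moreover have "p'!j \<noteq> w"
      proof
        assume "p'!j = w"
        then have "p'!j = p'!0" using p'1 ne by (simp add: hd_conv_nth)
        moreover have "0 < length p'" using ne by auto
        ultimately show False using nth_eq_iff_index_eq[OF p'1(1) jl, of 0] j by auto
      qed
      ultimately have "deg F (p'!j) = deg F' (p'!j)" using degeq[of "p'!j"] by simp
      then show ?thesis using pij p'1(6)[OF j(2,3)] by simp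
    qed
    have c7: "incident F (p ! i) \<subseteq> path_edges p" if i: "i < length p - 1" for i
    proof (cases i)
      case 0 then show ?thesis using w(1) pe p_def by simp
    next
      case (Suc j)
      then have "j < length p' - 1" "p!i = p'!j" using i p_def by auto
      then show ?thesis using p'1(7)[of j] incsub[of "p'!j"] pe by auto
    qed
    have "walkprop F T a p" unfolding walkprop_def using c1 c2 c3 c4 c5 c6 c7 by simp
    then show ?thesis by blast
  qed
qed


locale cgraph =
  fixes V :: "'a set" and E :: "'a set set"
  assumes simple: "simple_graph V E" and cub: "cubic V E"
begin

lemma finV: "finite V" using simple unfolding simple_graph_def by auto

lemma edgeE: "e \<in> E \<Longrightarrow> \<exists>x y. x \<in> V \<and> y \<in> V \<and> x \<noteq> y \<and> e = {x,y}"
  using simple unfolding simple_graph_def by auto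

lemma E_sub: "E \<subseteq> Pow V" using edgeE by blast

lemma finE: "finite E" using finite_subset[OF E_sub] finV by simp

lemma edges2E: "edges2 E" unfolding edges2_def using edgeE by blast

lemma edge_in_V: "{x,y} \<in> E \<Longrightarrow> x \<in> V \<and> y \<in> V"
  using E_sub by auto

lemma edge_neq: "{x,y} \<in> E \<Longrightarrow> x \<noteq> y"
proof -
  assume h: "{x,y} \<in> E"
  obtain a b where ab: "a \<noteq> b" "{x,y} = {a,b}" using edgeE[OF h] by blast
  then show ?thesis by (auto simp: doubleton_eq_iff)
qed

lemma degE: "x \<in> V \<Longrightarrow> deg E x = 3" using cub unfolding cubic_def by auto

lemma deg_le3: "A \<subseteq> E \<Longrightarrow> x \<in> V \<Longrightarrow> deg A x \<le> 3"
proof -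
  assume "A \<subseteq> E" "x \<in> V"
  then show ?thesis using deg_mono[OF finE, of A x] degE[of x] by simp
qed

lemma deg_notV: "A \<subseteq> E \<Longrightarrow> x \<notin> V \<Longrightarrow> deg A x = 0"
proof -
  assume "A \<subseteq> E" "x \<notin> V"
  then have "incident A x = {}" unfolding incident_def using E_sub by auto
  then show ?thesis unfolding deg_def by simp
qed

lemma finA: "A \<subseteq> E \<Longrightarrow> finite A" by (rule finite_subset[OF _ finE])

lemma full_all: "A \<subseteq> E \<Longrightarrow> x \<in> V \<Longrightarrow> deg A x = 3 \<Longrightarrow> {x,y} \<in> E \<Longrightarrow> {x,y} \<in> A"
proof -
  assume h: "A \<subseteq> E" "x \<in> V" "deg A x = 3" "{x,y} \<in> E"
  have s: "incident A x \<subseteq> incident E x" by (rule incident_mono[OF h(1)])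
  have c: "card (incident A x) = card (incident E x)" using h(3) degE[OF h(2)] unfolding deg_def by simp
  have "incident A x = incident E x" using card_subset_eq[OF finite_incident[OF finE] s c] .
  moreover have "{x,y} \<in> incident E x" using h(4) unfolding incident_def by simp
  ultimately have "{x,y} \<in> incident A x" by simp
  then show ?thesis unfolding incident_def by simp
qed

lemma deg_insert_edge: "A \<subseteq> E \<Longrightarrow> e \<notin> A \<Longrightarrow> deg (insert e A) x = (if x \<in> e then Suc (deg A x) else deg A x)"
  by (rule deg_insert[OF finA])

lemma deg_remove_edge: "A \<subseteq> E \<Longrightarrow> e \<in> A \<Longrightarrow> deg (A - {e}) x = (if x \<in> e then deg A x - 1 else deg A x)"
  by (rule deg_remove[OF finA])

definition S where "S = states V E"

lemma state_profile:
  assumes "(A,u,v) \<in> S"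
  shows "A \<subseteq> E" "u \<in> V" "v \<in> V" "\<And>x. x \<in> V \<Longrightarrow> x \<noteq> u \<Longrightarrow> x \<noteq> v \<Longrightarrow> deg A x = 2"
    "u = v \<Longrightarrow> deg A u = 2"
    "u \<noteq> v \<Longrightarrow> (deg A u = 1 \<and> deg A v = 3) \<or> (deg A u = 3 \<and> deg A v = 1) \<or> (deg A u = 3 \<and> deg A v = 3)"
proof -
  have h: "A \<subseteq> E" "u \<in> V" "v \<in> V" "(if u \<noteq> v then odd_set V A = {u, v} else odd_set V A = {})"
    "\<forall>w\<in>V. deg A w \<ge> 1" "deg A u + deg A v \<ge> 4"
    using assms unfolding S_def states_def by auto
  show "A \<subseteq> E" "u \<in> V" "v \<in> V" using h by auto
  have le3: "\<And>x. x \<in> V \<Longrightarrow> deg A x \<le> 3" using deg_le3 h by auto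
  show "deg A x = 2" if "x \<in> V" "x \<noteq> u" "x \<noteq> v" for x
  proof -
    have "x \<notin> odd_set V A" using h(4) that by (auto split: if_splits)
    then have "even (deg A x)" using that unfolding odd_set_def by auto
    moreover have "1 \<le> deg A x" "deg A x \<le> 3" using h le3 that by auto
    ultimately show ?thesis by presburger
  qed
  show "deg A u = 2" if "u = v"
  proof -
    have "u \<notin> odd_set V A" using h(4) that by (auto split: if_splits)
    then have "even (deg A u)" using h unfolding odd_set_def by auto
    moreover have "2 \<le> deg A u" "deg A u \<le> 3" using h le3 that by auto
    ultimately show ?thesis by presburger
  qed
  show "(deg A u = 1 \<and> deg A v = 3) \<or> (deg A u = 3 \<and> deg A v = 1) \<or> (deg A u = 3 \<and> deg A v = 3)" if "u \<noteq> v"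
  proof -
    have "u \<in> odd_set V A" "v \<in> odd_set V A" using h(4) that by auto
    then have "odd (deg A u)" "odd (deg A v)" unfolding odd_set_def by auto
    moreover have "deg A u \<le> 3" "deg A v \<le> 3" using h le3 by auto
    ultimately show ?thesis using h(6) by presburger
  qed
qed

lemma mk_state:
  assumes "A \<subseteq> E" "u \<in> V" "v \<in> V" "\<And>x. x \<in> V \<Longrightarrow> x \<noteq> u \<Longrightarrow> x \<noteq> v \<Longrightarrow> deg A x = 2"
    "u = v \<Longrightarrow> deg A u = 2"
    "u \<noteq> v \<Longrightarrow> (deg A u = 1 \<and> deg A v = 3) \<or> (deg A u = 3 \<and> deg A v = 1) \<or> (deg A u = 3 \<and> deg A v = 3)"
  shows "(A,u,v) \<in> S"
proof -
  have os: "(if u \<noteq> v then odd_set V A = {u, v} else odd_set V A = {})"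
  proof (cases "u = v")
    case True
    have "odd_set V A = {}"
    proof (rule equals0I)
      fix x assume x: "x \<in> odd_set V A"
      then have "x \<in> V" "odd (deg A x)" unfolding odd_set_def by auto
      moreover have "deg A x = 2"
      proof (cases "x = u")
        case True then show ?thesis using assms(5) \<open>u = v\<close> by simp
      next
        case False then show ?thesis using assms(4)[of x] \<open>u = v\<close> \<open>x \<in> V\<close> by simp
      qed
      ultimately show False by simp
    qed
    then show ?thesis using True by simp
  next
    case False
    then have ou: "odd (deg A u)" "odd (deg A v)" using assms(6) by auto
    have "odd_set V A = {u,v}"
    proof (rule set_eqI, rule iffI)
      fix x assume x: "x \<in> odd_set V A"
      then have "x \<in> V" "odd (deg A x)" unfolding odd_set_def by auto
      then show "x \<in> {u,v}" using assms(4)[of x] by (cases "x = u \<or> x = v") auto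
    next
      fix x assume "x \<in> {u,v}"
      then show "x \<in> odd_set V A" using ou assms(2,3) unfolding odd_set_def by auto
    qed
    then show ?thesis using False by simp
  qed
  have "\<forall>w\<in>V. deg A w \<ge> 1"
  proof
    fix w assume w: "w \<in> V"
    show "deg A w \<ge> 1"
    proof (cases "w = u \<or> w = v")
      case True
      then show ?thesis using assms(5,6) by (cases "u = v") auto
    next
      case False
      then show ?thesis using assms(4)[of w] w by simp
    qed
  qed
  moreover have "deg A u + deg A v \<ge> 4" using assms(5,6) by (cases "u = v") auto
  ultimately show ?thesis unfolding S_def states_def using assms(1,2,3) os by simp
qed

definition full :: "'a set set \<Rightarrow> 'a \<Rightarrow> 'a \<Rightarrow> bool" where
  "full A u v \<longleftrightarrow> deg A u = 3 \<and> deg A v = 3"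

end


context cgraph begin

inductive_set mv :: "('a state \<times> 'a state) set" where
  addU: "(A,u,v) \<in> S \<Longrightarrow> \<not> full A u v \<Longrightarrow> {u,w} \<in> E \<Longrightarrow> {u,w} \<notin> A \<Longrightarrow> ((A,u,v), (insert {u,w} A, w, v)) \<in> mv"
| remU: "(A,u,v) \<in> S \<Longrightarrow> full A u v \<Longrightarrow> {u,w} \<in> A \<Longrightarrow> ((A,u,v), (A - {{u,w}}, w, v)) \<in> mv"
| addV: "(A,u,v) \<in> S \<Longrightarrow> \<not> full A u v \<Longrightarrow> {v,w} \<in> E \<Longrightarrow> {v,w} \<notin> A \<Longrightarrow> ((A,u,v), (insert {v,w} A, u, w)) \<in> mv"
| remV: "(A,u,v) \<in> S \<Longrightarrow> full A u v \<Longrightarrow> {v,w} \<in> A \<Longrightarrow> ((A,u,v), (A - {{v,w}}, u, w)) \<in> mv"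

lemma add_result:
  assumes s: "(A,u,v) \<in> S" and nf: "\<not> full A u v" and e: "{u,w} \<in> E" "{u,w} \<notin> A"
  shows "(insert {u,w} A, w, v) \<in> S" "full (insert {u,w} A) w v"
proof -
  note p = state_profile[OF s]
  have uw: "u \<noteq> w" using edge_neq e(1) .
  have wV: "w \<in> V" using edge_in_V e(1) by simp
  have du: "deg A u \<noteq> 3"
  proof
    assume "deg A u = 3"
    then have "{u,w} \<in> A" using full_all[OF p(1) p(2) _ e(1)] by simp
    then show False using e(2) by simp
  qed
  have wv: "w \<noteq> v \<and> deg A w = 2 \<and> deg A v = (if u = v then 2 else 3)"
  proof (cases "u = v")
    case True
    then show ?thesis using p(4)[OF wV] p(5) uw by auto
  next
    case False
    then have d: "deg A u = 1" "deg A v = 3" using p(6) du by auto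
    have "w \<noteq> v"
    proof
      assume "w = v"
      then have "{v,u} \<in> E" using e(1) by (simp add: insert_commute)
      then have "{v,u} \<in> A" using full_all[OF p(1) p(3) d(2)] by simp
      then show False using e(2) \<open>w = v\<close> by (simp add: insert_commute)
    qed
    then show ?thesis using p(4)[OF wV] False d uw by auto
  qed
  let ?A = "insert {u,w} A"
  have sub: "?A \<subseteq> E" using p(1) e(1) by simp
  have dg: "deg ?A x = (if x \<in> {u,w} then Suc (deg A x) else deg A x)" for x
    using deg_insert_edge[OF p(1) e(2)] by simp
  have dw: "deg ?A w = 3" using dg[of w] wv by simp
  have dv: "deg ?A v = 3"
  proof (cases "u = v")
    case True then show ?thesis using dg[of v] wv by simp
  next
    case False then show ?thesis using dg[of v] wv by simp
  qed
  show "full ?A w v" unfolding full_def using dw dv by simp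
  show "(?A, w, v) \<in> S"
  proof (rule mk_state)
    show "?A \<subseteq> E" by (rule sub)
    show "w \<in> V" "v \<in> V" using wV p(3) by auto
    show "deg ?A x = 2" if "x \<in> V" "x \<noteq> w" "x \<noteq> v" for x
    proof (cases "x = u")
      case True
      then have "u \<noteq> v" using that by simp
      then have "deg A u = 1" using p(6) du by auto
      then show ?thesis using dg[of x] True by simp
    next
      case False
      then show ?thesis using dg[of x] p(4)[of x] that by simp
    qed
    show "deg ?A w = 2" if "w = v" using that wv by simp
    show "(deg ?A w = 1 \<and> deg ?A v = 3) \<or> (deg ?A w = 3 \<and> deg ?A v = 1) \<or> (deg ?A w = 3 \<and> deg ?A v = 3)"
      using dw dv by simp
  qed
qed

lemma rem_result:
  assumes s: "(A,u,v) \<in> S" and f: "full A u v" and e: "{u,w} \<in> A"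
  shows "(A - {{u,w}}, w, v) \<in> S" "\<not> full (A - {{u,w}}) w v"
proof -
  note p = state_profile[OF s]
  have eE: "{u,w} \<in> E" using e p(1) by auto
  have uw: "u \<noteq> w" using edge_neq eE .
  have wV: "w \<in> V" using edge_in_V eE by simp
  have d: "deg A u = 3" "deg A v = 3" using f unfolding full_def by auto
  have uv: "u \<noteq> v" using d p(5) by auto
  let ?A = "A - {{u,w}}"
  have sub: "?A \<subseteq> E" using p(1) by auto
  have dg: "deg ?A x = (if x \<in> {u,w} then deg A x - 1 else deg A x)" for x
    using deg_remove_edge[OF p(1) e] by simp
  have dw: "deg ?A w \<le> 2" using dg[of w] deg_le3[OF p(1) wV] by simp
  show "\<not> full ?A w v" unfolding full_def using dw by simp
  show "(?A, w, v) \<in> S"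
  proof (rule mk_state)
    show "?A \<subseteq> E" by (rule sub)
    show "w \<in> V" "v \<in> V" using wV p(3) by auto
    show "deg ?A x = 2" if "x \<in> V" "x \<noteq> w" "x \<noteq> v" for x
    proof (cases "x = u")
      case True
      then show ?thesis using dg[of x] d by simp
    next
      case False
      then show ?thesis using dg[of x] p(4)[of x] that by simp
    qed
    show "deg ?A w = 2" if "w = v" using that dg[of w] d by simp
    show "(deg ?A w = 1 \<and> deg ?A v = 3) \<or> (deg ?A w = 3 \<and> deg ?A v = 1) \<or> (deg ?A w = 3 \<and> deg ?A v = 3)"
      if "w \<noteq> v"
    proof -
      have "deg ?A w = 1" using dg[of w] p(4)[OF wV] that uw by simp
      moreover have "deg ?A v = 3" using dg[of v] that uv d by simp
      ultimately show ?thesis by simp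
    qed
  qed
qed

lemma state_swap: "(A,u,v) \<in> S \<Longrightarrow> (A,v,u) \<in> S"
proof -
  assume s: "(A,u,v) \<in> S"
  note p = state_profile[OF s]
  show ?thesis
    apply (rule mk_state)
    using p by auto
qed

lemma full_swap: "full A u v = full A v u" unfolding full_def by auto

lemma add_resultV:
  assumes s: "(A,u,v) \<in> S" and nf: "\<not> full A u v" and e: "{v,w} \<in> E" "{v,w} \<notin> A"
  shows "(insert {v,w} A, u, w) \<in> S" "full (insert {v,w} A) u w"
proof -
  have "(insert {v,w} A, w, u) \<in> S" "full (insert {v,w} A) w u"
    using add_result[OF state_swap[OF s] _ e] nf full_swap by auto
  then show "(insert {v,w} A, u, w) \<in> S" "full (insert {v,w} A) u w" using state_swap full_swap by auto
qed

lemma rem_resultV: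
  assumes s: "(A,u,v) \<in> S" and f: "full A u v" and e: "{v,w} \<in> A"
  shows "(A - {{v,w}}, u, w) \<in> S" "\<not> full (A - {{v,w}}) u w"
proof -
  have "(A - {{v,w}}, w, u) \<in> S" "\<not> full (A - {{v,w}}) w u"
    using rem_result[OF state_swap[OF s] _ e] f full_swap by auto
  then show "(A - {{v,w}}, u, w) \<in> S" "\<not> full (A - {{v,w}}) u w" using state_swap full_swap by auto
qed

lemma mv_S0: "((A0,u0,v0),(A1,u1,v1)) \<in> mv \<Longrightarrow> (A0,u0,v0) \<in> S \<and> (A1,u1,v1) \<in> S"
proof (induction rule: mv.induct)
  case (addU A u v w) then show ?case using add_result(1)[OF addU] by simp
next
  case (remU A u v w) then show ?case using rem_result(1)[OF remU] by simp
next
  case (addV A u v w) then show ?case using add_resultV(1)[OF addV] by simp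
next
  case (remV A u v w) then show ?case using rem_resultV(1)[OF remV] by simp
qed

lemma mv_sym0: "((A0,u0,v0),(A1,u1,v1)) \<in> mv \<Longrightarrow> ((A1,u1,v1),(A0,u0,v0)) \<in> mv"
proof (induction rule: mv.induct)
  case (addU A u v w)
  note r = add_result[OF addU]
  have "{w,u} \<in> insert {u,w} A" by (simp add: insert_commute)
  then have "((insert {u,w} A, w, v), (insert {u,w} A - {{w,u}}, u, v)) \<in> mv"
    using mv.remU[OF r(1) r(2)] by blast
  moreover have "insert {u,w} A - {{w,u}} = A" using addU(4) by (auto simp: insert_commute)
  ultimately show ?case by simp
next
  case (remU A u v w)
  note r = rem_result[OF remU]
  have p1: "A \<subseteq> E" using state_profile(1)[OF remU(1)] .
  have "{w,u} \<in> E" using remU(3) p1 by (auto simp: insert_commute)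
  moreover have "{w,u} \<notin> A - {{u,w}}" by (simp add: insert_commute)
  ultimately have "((A - {{u,w}}, w, v), (insert {w,u} (A - {{u,w}}), u, v)) \<in> mv"
    using mv.addU[OF r(1) r(2)] by blast
  moreover have "insert {w,u} (A - {{u,w}}) = A" using remU(3) by (auto simp: insert_commute)
  ultimately show ?case by simp
next
  case (addV A u v w)
  note r = add_resultV[OF addV]
  have "{w,v} \<in> insert {v,w} A" by (simp add: insert_commute)
  then have "((insert {v,w} A, u, w), (insert {v,w} A - {{w,v}}, u, v)) \<in> mv"
    using mv.remV[OF r(1) r(2)] by blast
  moreover have "insert {v,w} A - {{w,v}} = A" using addV(4) by (auto simp: insert_commute)
  ultimately show ?case by simp
next
  case (remV A u v w)
  note r = rem_resultV[OF remV]
  have p1: "A \<subseteq> E" using state_profile(1)[OF remV(1)] .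
  have "{w,v} \<in> E" using remV(3) p1 by (auto simp: insert_commute)
  moreover have "{w,v} \<notin> A - {{v,w}}" by (simp add: insert_commute)
  ultimately have "((A - {{v,w}}, u, w), (insert {w,v} (A - {{v,w}}), u, v)) \<in> mv"
    using mv.addV[OF r(1) r(2)] by blast
  moreover have "insert {w,v} (A - {{v,w}}) = A" using remV(3) by (auto simp: insert_commute)
  ultimately show ?case by simp
qed

lemma mv_S: "(s,t) \<in> mv \<Longrightarrow> s \<in> S \<and> t \<in> S"
  using mv_S0 by (cases s; cases t) auto

lemma mv_sym: "(s,t) \<in> mv \<Longrightarrow> (t,s) \<in> mv"
  using mv_sym0 by (cases s; cases t) auto

lemma mv_rtrancl_sym: "(s,t) \<in> mv\<^sup>* \<Longrightarrow> (t,s) \<in> mv\<^sup>*"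
proof (induction rule: rtrancl_induct)
  case base then show ?case by simp
next
  case (step y z) then show ?case using mv_sym by (meson converse_rtrancl_into_rtrancl)
qed

end


context cgraph begin

definition twofactor :: "'a set set \<Rightarrow> bool" where
  "twofactor F \<longleftrightarrow> F \<subseteq> E \<and> (\<forall>x\<in>V. deg F x = 2)"

lemma edge_at: "e \<in> E \<Longrightarrow> x \<in> e \<Longrightarrow> \<exists>y. e = {x,y}"
  using edgeE by blast

lemma non_edges_card: "A \<subseteq> E \<Longrightarrow> x \<in> V \<Longrightarrow> card (incident E x - incident A x) = 3 - deg A x"
proof -
  assume h: "A \<subseteq> E" "x \<in> V"
  have s: "incident A x \<subseteq> incident E x" by (rule incident_mono[OF h(1)])
  have "card (incident E x - incident A x) = card (incident E x) - card (incident A x)"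
    using card_Diff_subset[OF finite_subset[OF s finite_incident[OF finE]] s] .
  then show ?thesis using degE[OF h(2)] unfolding deg_def by simp
qed

lemma other_edge:
  assumes "A \<subseteq> E" "x \<in> V" "deg A x = 2"
  obtains y where "{x,y} \<in> E" "{x,y} \<notin> A" "\<And>z. {x,z} \<in> E \<Longrightarrow> {x,z} \<notin> A \<Longrightarrow> z = y"
proof -
  have "card (incident E x - incident A x) = 1" using non_edges_card[OF assms(1,2)] assms(3) by simp
  then obtain e where e: "incident E x - incident A x = {e}" by (auto simp: card_1_singleton_iff)
  then have "e \<in> E" "x \<in> e" "e \<notin> A" unfolding incident_def by auto
  then obtain y where y: "e = {x,y}" using edge_at by blast
  have "z = y" if "{x,z} \<in> E" "{x,z} \<notin> A" for z
  proof -
    have "{x,z} \<in> incident E x - incident A x" using that unfolding incident_def by auto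
    then have "{x,z} = {x,y}" using e y by auto
    then show ?thesis by (auto simp: doubleton_eq_iff)
  qed
  then show ?thesis using that y \<open>e \<in> E\<close> \<open>e \<notin> A\<close> by blast
qed

lemma deg1_non_edge:
  assumes "A \<subseteq> E" "x \<in> V" "deg A x = 1"
  obtains y where "{x,y} \<in> E" "{x,y} \<notin> A"
proof -
  have "card (incident E x - incident A x) = 2" using non_edges_card[OF assms(1,2)] assms(3) by simp
  then have "incident E x - incident A x \<noteq> {}" by (metis card.empty zero_neq_numeral)
  then obtain e where e: "e \<in> incident E x - incident A x" by blast
  then have "e \<in> E" "x \<in> e" "e \<notin> A" unfolding incident_def by auto
  then obtain y where y: "e = {x,y}" using edge_at by blast
  then show ?thesis using that \<open>e \<in> E\<close> \<open>e \<notin> A\<close> by blast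
qed

lemma twofactor_state: "twofactor F \<Longrightarrow> x \<in> V \<Longrightarrow> (F,x,x) \<in> S \<and> \<not> full F x x"
proof -
  assume h: "twofactor F" "x \<in> V"
  have "(F,x,x) \<in> S" apply (rule mk_state) using h unfolding twofactor_def by auto
  moreover have "\<not> full F x x" using h unfolding twofactor_def full_def by auto
  ultimately show ?thesis by simp
qed

lemma baseM:
  assumes F: "twofactor F" and e: "{x,y} \<in> E" "{x,y} \<notin> F"
  shows "((F,x,x),(F,y,y)) \<in> mv\<^sup>*"
proof -
  have xV: "x \<in> V" using edge_in_V e(1) by simp
  note s0 = twofactor_state[OF F xV]
  have m1: "((F,x,x),(insert {x,y} F, y, x)) \<in> mv" using mv.addU[OF _ _ e] s0 by blast
  note r1 = add_result[OF _ _ e, of x] s0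
  have "{x,y} \<in> insert {x,y} F" by simp
  then have m2: "((insert {x,y} F, y, x), (insert {x,y} F - {{x,y}}, y, y)) \<in> mv"
    using mv.remV[of "insert {x,y} F" y x y] r1 s0 by blast
  have "insert {x,y} F - {{x,y}} = F" using e(2) by auto
  then show ?thesis using m1 m2 by simp
qed

lemma baseF:
  assumes F: "twofactor F" and wz: "{w,z} \<in> F"
  shows "((F,w,w),(F,z,z)) \<in> mv\<^sup>*"
proof -
  have FE: "F \<subseteq> E" using F unfolding twofactor_def by simp
  have wzE: "{w,z} \<in> E" using wz FE by auto
  have wV: "w \<in> V" and zV: "z \<in> V" using edge_in_V wzE by auto
  have wnz: "w \<noteq> z" using edge_neq wzE .
  have dF: "\<And>x. x \<in> V \<Longrightarrow> deg F x = 2" using F unfolding twofactor_def by simp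
  obtain w' where w': "{w,w'} \<in> E" "{w,w'} \<notin> F" "\<And>t. {w,t} \<in> E \<Longrightarrow> {w,t} \<notin> F \<Longrightarrow> t = w'"
    using other_edge[OF FE wV dF[OF wV]] by metis
  obtain z' where z': "{z,z'} \<in> E" "{z,z'} \<notin> F" "\<And>t. {z,t} \<in> E \<Longrightarrow> {z,t} \<notin> F \<Longrightarrow> t = z'"
    using other_edge[OF FE zV dF[OF zV]] by metis
  have w'V: "w' \<in> V" and z'V: "z' \<in> V" using edge_in_V w'(1) z'(1) by auto
  have ww': "w \<noteq> w'" using edge_neq w'(1) .
  have zz': "z \<noteq> z'" using edge_neq z'(1) .
  have w'z: "w' \<noteq> z" using w'(2) wz by auto
  have z'w: "z' \<noteq> w" using z'(2) wz by (auto simp: insert_commute)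
  have w'z': "w' \<noteq> z'"
  proof
    assume eq: "w' = z'"
    obtain t where t: "{w',t} \<in> E" "{w',t} \<notin> F" "\<And>r. {w',r} \<in> E \<Longrightarrow> {w',r} \<notin> F \<Longrightarrow> r = t"
      using other_edge[OF FE w'V dF[OF w'V]] by metis
    have "w = t" using t(3)[of w] w'(1,2) by (simp add: insert_commute)
    moreover have "z = t" using t(3)[of z] z'(1,2) eq by (simp add: insert_commute)
    ultimately show False using wnz by simp
  qed
  define A1 where "A1 = insert {w,w'} F"
  define A2 where "A2 = A1 - {{w,z}}"
  define A3 where "A3 = insert {z,z'} A2"
  define A4 where "A4 = A3 - {{w',w}}"
  define A5 where "A5 = insert {w,z} A4"
  define A6 where "A6 = A5 - {{z',z}}"
  note s0 = twofactor_state[OF F wV]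
  have m1: "((F,w,w),(A1,w',w)) \<in> mv" unfolding A1_def using mv.addU[OF _ _ w'(1,2)] s0 by blast
  note r1 = add_result[OF _ _ w'(1,2), of w] s0
  have s1: "(A1,w',w) \<in> S" "full A1 w' w" using r1 unfolding A1_def by auto
  have e2: "{w,z} \<in> A1" unfolding A1_def using wz by simp
  have m2: "((A1,w',w),(A2,w',z)) \<in> mv" unfolding A2_def using mv.remV[OF s1 e2] .
  have s2: "(A2,w',z) \<in> S" "\<not> full A2 w' z" using rem_resultV[OF s1 e2] unfolding A2_def by auto
  have e3: "{z,z'} \<notin> A2" unfolding A2_def A1_def using z'(2) zz' w'z z'w wnz by (auto simp: doubleton_eq_iff)
  have m3: "((A2,w',z),(A3,w',z')) \<in> mv" unfolding A3_def using mv.addV[OF s2 z'(1) e3] .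
  have s3: "(A3,w',z') \<in> S" "full A3 w' z'" using add_resultV[OF s2 z'(1) e3] unfolding A3_def by auto
  have e4: "{w',w} \<in> A3" unfolding A3_def A2_def A1_def using w'z by (auto simp: doubleton_eq_iff)
  have m4: "((A3,w',z'),(A4,w,z')) \<in> mv" unfolding A4_def using mv.remU[OF s3 e4] .
  have s4: "(A4,w,z') \<in> S" "\<not> full A4 w z'" using rem_result[OF s3 e4] unfolding A4_def by auto
  have e5: "{w,z} \<notin> A4" unfolding A4_def A3_def A2_def using z'w by (auto simp: doubleton_eq_iff)
  have m5: "((A4,w,z'),(A5,z,z')) \<in> mv" unfolding A5_def using mv.addU[OF s4 wzE e5] .
  have s5: "(A5,z,z') \<in> S" "full A5 z z'" using add_result[OF s4 wzE e5] unfolding A5_def by auto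
  have e6: "{z',z} \<in> A5" unfolding A5_def A4_def A3_def using ww' w'z w'z' z'w wnz zz' by (auto simp: doubleton_eq_iff)
  have m6: "((A5,z,z'),(A6,z,z)) \<in> mv" unfolding A6_def using mv.remV[OF s5 e6] .
  have "A6 = F"
  proof (rule set_eqI)
    fix e
    show "e \<in> A6 \<longleftrightarrow> e \<in> F"
      unfolding A6_def A5_def A4_def A3_def A2_def A1_def
      using wz w'(2) z'(2) ww' w'z w'z' z'w wnz zz' by (auto simp: doubleton_eq_iff insert_commute)
  qed
  then show ?thesis using m1 m2 m3 m4 m5 m6 by (meson converse_rtrancl_into_rtrancl r_into_rtrancl)
qed

lemma base_conn:
  assumes F: "twofactor F" and conn: "connected_graph V E" and xV: "x \<in> V" and yV: "y \<in> V"
  shows "((F,x,x),(F,y,y)) \<in> mv\<^sup>*"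
proof -
  have "(x,y) \<in> (adj_rel E)\<^sup>*" using conn xV yV unfolding connected_graph_def by auto
  then show ?thesis
  proof (induction rule: rtrancl_induct)
    case base then show ?case by simp
  next
    case (step y z)
    then have e: "{y,z} \<in> E" unfolding adj_rel_def by simp
    show ?case
    proof (cases "{y,z} \<in> F")
      case True then show ?thesis using step.IH baseF[OF F True] by (meson rtrancl_trans)
    next
      case False then show ?thesis using step.IH baseM[OF F e False] by (meson rtrancl_trans)
    qed
  qed
qed

lemma sd_rem: "e \<in> A \<Longrightarrow> e \<notin> Fs \<Longrightarrow> sym_diff (A - {e}) Fs = sym_diff A Fs - {e} \<and> e \<in> sym_diff A Fs"
  unfolding sym_diff_def by auto

lemma sd_ins: "e \<notin> A \<Longrightarrow> e \<in> Fs \<Longrightarrow> sym_diff (insert e A) Fs = sym_diff A Fs - {e} \<and> e \<in> sym_diff A Fs"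
  unfolding sym_diff_def by auto

lemma sd_fin: "A \<subseteq> E \<Longrightarrow> Fs \<subseteq> E \<Longrightarrow> finite (sym_diff A Fs)"
  unfolding sym_diff_def using finA by auto

lemma twofactor_diff:
  assumes "twofactor F" "twofactor G" "F \<noteq> G"
  shows "\<exists>e\<in>G. e \<notin> F"
proof (rule ccontr)
  assume "\<not> ?thesis"
  then have GF: "G \<subseteq> F" by auto
  have "F \<subseteq> G"
  proof
    fix e assume e: "e \<in> F"
    have eE: "e \<in> E" using e assms(1) unfolding twofactor_def by auto
    then obtain x y where xy: "x \<in> V" "e = {x,y}" using edgeE by blast
    have s: "incident G x \<subseteq> incident F x" by (rule incident_mono[OF GF])
    have c: "card (incident G x) = card (incident F x)" using assms(1,2) xy unfolding twofactor_def deg_def by simp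
    have FE: "F \<subseteq> E" using assms(1) unfolding twofactor_def by simp
    have "incident G x = incident F x" using card_subset_eq[OF finite_incident[OF finA[OF FE]] s c] .
    moreover have "e \<in> incident F x" using e xy unfolding incident_def by simp
    ultimately show "e \<in> G" unfolding incident_def by blast
  qed
  then show False using GF assms(3) by simp
qed

lemma desc:
  assumes Fs: "twofactor Fs" and conn: "connected_graph V E"
  shows "(A,u,v) \<in> S \<Longrightarrow> (u = v \<or> full A u v) \<Longrightarrow> \<exists>x\<in>V. ((A,u,v),(Fs,x,x)) \<in> mv\<^sup>*"
proof (induction "card (sym_diff A Fs)" arbitrary: A u v rule: less_induct)
  case less
  note p = state_profile[OF less.prems(1)]
  have FsE: "Fs \<subseteq> E" using Fs unfolding twofactor_def by simp
  have fin: "finite (sym_diff A Fs)" using sd_fin[OF p(1) FsE] .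
  show ?case
  proof (cases "u = v")
    case True
    have A2: "twofactor A" unfolding twofactor_def
    proof (intro conjI ballI)
      show "A \<subseteq> E" by (rule p(1))
      fix x assume "x \<in> V"
      then show "deg A x = 2" using p(4)[of x] p(5) True by (cases "x = u") auto
    qed
    show ?thesis
    proof (cases "A = Fs")
      case True then show ?thesis using \<open>u = v\<close> p(2) by blast
    next
      case False
      then obtain e where e: "e \<in> Fs" "e \<notin> A" using twofactor_diff[OF A2 Fs] by blast
      have eE: "e \<in> E" using e FsE by auto
      then obtain c c' where cc: "c \<in> V" "e = {c,c'}" using edgeE by blast
      have b: "((A,u,v),(A,c,c)) \<in> mv\<^sup>*" using base_conn[OF A2 conn p(2) cc(1)] True by simp
      note sc = twofactor_state[OF A2 cc(1)]
      have eE': "{c,c'} \<in> E" "{c,c'} \<notin> A" using eE e cc by auto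
      have m: "((A,c,c),(insert {c,c'} A, c', c)) \<in> mv" using mv.addU[OF _ _ eE'] sc by blast
      note r = add_result[OF _ _ eE', of c] sc
      have "card (sym_diff (insert e A) Fs) < card (sym_diff A Fs)"
        using sd_ins[OF e(2) e(1)] card_Diff1_less[OF fin, of e] by simp
      then obtain x where x: "x \<in> V" "((insert e A, c', c),(Fs,x,x)) \<in> mv\<^sup>*"
        using less.hyps[of "insert e A" c' c] r cc by auto
      then show ?thesis using b m cc by (meson rtrancl_trans converse_rtrancl_into_rtrancl)
    qed
  next
    case False
    then have f: "full A u v" using less.prems(2) by simp
    then have du: "deg A u = 3" unfolding full_def by simp
    obtain y where y: "{u,y} \<in> E" "{u,y} \<notin> Fs" "\<And>t. {u,t} \<in> E \<Longrightarrow> {u,t} \<notin> Fs \<Longrightarrow> t = y"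
      using other_edge[OF FsE p(2)] Fs p(2) unfolding twofactor_def by metis
    have uyA: "{u,y} \<in> A" using full_all[OF p(1) p(2) du y(1)] .
    have yV: "y \<in> V" using edge_in_V y(1) by simp
    have uy: "u \<noteq> y" using edge_neq y(1) .
    have m1: "((A,u,v),(A - {{u,y}}, y, v)) \<in> mv" using mv.remU[OF less.prems(1) f uyA] .
    note r1 = rem_result[OF less.prems(1) f uyA]
    have sd1: "sym_diff (A - {{u,y}}) Fs = sym_diff A Fs - {{u,y}}" "{u,y} \<in> sym_diff A Fs"
      using sd_rem[OF uyA y(2)] by auto
    show ?thesis
    proof (cases "y = v")
      case True
      have "card (sym_diff (A - {{u,y}}) Fs) < card (sym_diff A Fs)"
        using sd1 card_Diff1_less[OF fin, of "{u,y}"] by simp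
      then obtain x where x: "x \<in> V" "((A - {{u,y}}, y, v),(Fs,x,x)) \<in> mv\<^sup>*"
        using less.hyps[of "A - {{u,y}}" y v] r1 True by auto
      then show ?thesis using m1 by (meson converse_rtrancl_into_rtrancl)
    next
      case False
      have dy: "deg A y = 2" using p(4)[OF yV] uy False by simp
      obtain m where m: "{y,m} \<in> E" "{y,m} \<notin> A" using other_edge[OF p(1) yV dy] by metis
      have mu: "m \<noteq> u" using m(2) uyA by (auto simp: insert_commute)
      let ?A1 = "A - {{u,y}}"
      have m2ne: "{y,m} \<notin> ?A1" using m(2) by simp
      have m2: "((?A1, y, v),(insert {y,m} ?A1, m, v)) \<in> mv" using mv.addU[OF r1(1) r1(2) m(1) m2ne] .
      note r2 = add_result[OF r1(1) r1(2) m(1) m2ne]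
      have ymFs: "{y,m} \<in> Fs"
      proof (rule ccontr)
        assume "{y,m} \<notin> Fs"
        obtain t where t: "{y,t} \<in> E" "{y,t} \<notin> Fs" "\<And>r. {y,r} \<in> E \<Longrightarrow> {y,r} \<notin> Fs \<Longrightarrow> r = t"
          using other_edge[OF FsE yV] Fs yV unfolding twofactor_def by metis
        have "m = t" using t(3) m(1) \<open>{y,m} \<notin> Fs\<close> by simp
        moreover have "u = t" using t(3)[of u] y(1,2) by (simp add: insert_commute)
        ultimately show False using mu by simp
      qed
      have sd2: "sym_diff (insert {y,m} ?A1) Fs = sym_diff ?A1 Fs - {{y,m}}" "{y,m} \<in> sym_diff ?A1 Fs"
        using sd_ins[OF m2ne ymFs] by auto
      have "card (sym_diff (insert {y,m} ?A1) Fs) < card (sym_diff A Fs)"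
      proof -
        have fin1: "finite (sym_diff ?A1 Fs)" using sd_fin[OF _ FsE, of ?A1] p(1) by auto
        have "card (sym_diff (insert {y,m} ?A1) Fs) < card (sym_diff ?A1 Fs)"
          using sd2 card_Diff1_less[OF fin1, of "{y,m}"] by simp
        also have "\<dots> < card (sym_diff A Fs)" using sd1 card_Diff1_less[OF fin, of "{u,y}"] by simp
        finally show ?thesis .
      qed
      then obtain x where x: "x \<in> V" "((insert {y,m} ?A1, m, v),(Fs,x,x)) \<in> mv\<^sup>*"
        using less.hyps[of "insert {y,m} ?A1" m v] r2 by auto
      then show ?thesis using m1 m2 by (meson converse_rtrancl_into_rtrancl)
    qed
  qed
qed

lemma reach_base:
  assumes Fs: "twofactor Fs" and conn: "connected_graph V E" and x0: "x0 \<in> V" and s: "s \<in> S"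
  shows "(s, (Fs,x0,x0)) \<in> mv\<^sup>*"
proof -
  obtain A u v where suv: "s = (A,u,v)" by (cases s) auto
  have sS: "(A,u,v) \<in> S" using s suv by simp
  note p = state_profile[OF sS]
  have fin: "(B,a,b) \<in> S \<Longrightarrow> (a = b \<or> full B a b) \<Longrightarrow> ((B,a,b),(Fs,x0,x0)) \<in> mv\<^sup>*" for B a b
  proof -
    assume h: "(B,a,b) \<in> S" "a = b \<or> full B a b"
    obtain x where "x \<in> V" "((B,a,b),(Fs,x,x)) \<in> mv\<^sup>*" using desc[OF Fs conn h] by blast
    then show ?thesis using base_conn[OF Fs conn _ x0] by (meson rtrancl_trans)
  qed
  show ?thesis
  proof (cases "u = v \<or> full A u v")
    case True then show ?thesis using fin[OF sS] suv by simp
  next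
    case False
    then have nf: "\<not> full A u v" "u \<noteq> v" by auto
    then have "deg A u = 1 \<or> deg A v = 1" using p(6) unfolding full_def by auto
    then show ?thesis
    proof
      assume "deg A u = 1"
      then obtain y where y: "{u,y} \<in> E" "{u,y} \<notin> A" using deg1_non_edge[OF p(1) p(2)] by metis
      have m: "((A,u,v),(insert {u,y} A, y, v)) \<in> mv" using mv.addU[OF sS nf(1) y] .
      note r = add_result[OF sS nf(1) y]
      show ?thesis using fin[OF r(1)] r(2) m suv by (meson converse_rtrancl_into_rtrancl)
    next
      assume "deg A v = 1"
      then obtain y where y: "{v,y} \<in> E" "{v,y} \<notin> A" using deg1_non_edge[OF p(1) p(3)] by metis
      have m: "((A,u,v),(insert {v,y} A, u, y)) \<in> mv" using mv.addV[OF sS nf(1) y] .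
      note r = add_resultV[OF sS nf(1) y]
      show ?thesis using fin[OF r(1)] r(2) m suv by (meson converse_rtrancl_into_rtrancl)
    qed
  qed
qed

end


context cgraph begin

lemma E_state_twofactor: "(F,x,x) \<in> S \<Longrightarrow> twofactor F"
proof -
  assume s: "(F,x,x) \<in> S"
  note p = state_profile[OF s]
  show ?thesis unfolding twofactor_def
  proof (intro conjI ballI)
    show "F \<subseteq> E" by (rule p(1))
    fix y assume "y \<in> V" then show "deg F y = 2" using p(4)[of y] p(5) by (cases "y = x") auto
  qed
qed

lemma opp_side:
  assumes X: "\<forall>e\<in>E. card (e \<inter> X) = 1" and e: "{x,y} \<in> E"
  shows "x \<in> X \<longleftrightarrow> y \<notin> X"
proof -
  have xy: "x \<noteq> y" using edge_neq e .
  have c: "card ({x,y} \<inter> X) = 1" using X e by auto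
  show ?thesis
  proof (cases "x \<in> X")
    case True
    show ?thesis
    proof (rule iffI)
      show "y \<notin> X"
      proof
        assume "y \<in> X"
        then have "{x,y} \<inter> X = {x,y}" using True by auto
        then show False using c xy by simp
      qed
    qed (use True in simp)
  next
    case False
    have "y \<in> X"
    proof (rule ccontr)
      assume "y \<notin> X"
      then have "{x,y} \<inter> X = {}" using False by auto
      then show False using c by simp
    qed
    then show ?thesis using False by simp
  qed
qed

lemma side_exists:
  assumes bip: "bipartite V E" and aV: "a \<in> V"
  shows "\<exists>X. a \<in> X \<and> (\<forall>e\<in>E. card (e \<inter> X) = 1)"
proof -
  obtain X where X: "X \<subseteq> V" "\<forall>e\<in>E. card (e \<inter> X) = 1" using bip unfolding bipartite_def by auto
  show ?thesis
  proof (cases "a \<in> X")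
    case True then show ?thesis using X by blast
  next
    case False
    have "\<forall>e\<in>E. card (e \<inter> (V - X)) = 1"
    proof
      fix e assume e: "e \<in> E"
      then obtain x y where xy: "x \<in> V" "y \<in> V" "x \<noteq> y" "e = {x,y}" using edgeE by blast
      have "x \<in> X \<longleftrightarrow> y \<notin> X" using opp_side[OF X(2)] e xy by simp
      then have "e \<inter> (V - X) = {y} \<or> e \<inter> (V - X) = {x}" using xy by auto
      then show "card (e \<inter> (V - X)) = 1" by auto
    qed
    then show ?thesis using False aV by blast
  qed
qed

definition J :: "'a set \<Rightarrow> 'a set set \<Rightarrow> 'a \<Rightarrow> 'a \<Rightarrow> bool" where
  "J X A x y \<longleftrightarrow> x \<in> X \<and> y \<in> X \<and> (\<exists>t. {x,t} \<in> E \<and> {t,y} \<in> E \<and> {t,y} \<notin> A)"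

lemma J_transfer:
  assumes X: "\<forall>e\<in>E. card (e \<inter> X) = 1" and tX: "t \<notin> X"
  shows "rtrancl_path (J X A) p qs z \<Longrightarrow> y \<notin> set qs \<Longrightarrow> rtrancl_path (J X (insert {t,y} (A - {{a,t}}))) p qs z"
proof (induction rule: rtrancl_path.induct)
  case (base x) then show ?case by (simp add: rtrancl_path.base)
next
  case (step x q ys z)
  have "J X (insert {t,y} (A - {{a,t}})) x q"
  proof -
    obtain s where s: "x \<in> X" "q \<in> X" "{x,s} \<in> E" "{s,q} \<in> E" "{s,q} \<notin> A" using step(1) unfolding J_def by blast
    have "q \<noteq> y" using step(4) by auto
    moreover have "q \<noteq> t" using s(2) tX by auto
    ultimately have "{s,q} \<noteq> {t,y}" by (auto simp: doubleton_eq_iff)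
    then have "{s,q} \<notin> insert {t,y} (A - {{a,t}})" using s(5) by simp
    then show ?thesis unfolding J_def using s by blast
  qed
  moreover have "rtrancl_path (J X (insert {t,y} (A - {{a,t}}))) q ys z" using step by simp
  ultimately show ?case by (rule rtrancl_path.step)
qed

lemma flip_exists:
  assumes X: "\<forall>e\<in>E. card (e \<inter> X) = 1"
  shows "rtrancl_path (J X A) a xs z \<Longrightarrow> distinct (a # xs) \<Longrightarrow> (A,a,b) \<in> S \<Longrightarrow> full A a b \<Longrightarrow> a \<in> X
    \<Longrightarrow> {z,b} \<in> E \<Longrightarrow> \<exists>F. twofactor F"
proof (induction xs arbitrary: a A)
  case Nil
  have "a = z" using Nil(1) by (cases rule: rtrancl_path.cases) auto
  then have ab: "{a,b} \<in> E" using Nil by simp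
  note p = state_profile[OF Nil(3)]
  have "deg A a = 3" using Nil(4) unfolding full_def by simp
  then have "{a,b} \<in> A" using full_all[OF p(1) p(2) _ ab] by simp
  then have "(A - {{a,b}}, b, b) \<in> S" using rem_result(1)[OF Nil(3) Nil(4)] by simp
  then show ?case using E_state_twofactor by blast
next
  case (Cons y ys)
  note p = state_profile[OF Cons(4)]
  have da: "deg A a = 3" using Cons(5) unfolding full_def by simp
  show ?case
  proof (cases "{a,b} \<in> E")
    case True
    then have "{a,b} \<in> A" using full_all[OF p(1) p(2) da] by simp
    then have "(A - {{a,b}}, b, b) \<in> S" using rem_result(1)[OF Cons(4) Cons(5)] by simp
    then show ?thesis using E_state_twofactor by blast
  next
    case False
    have Jy: "J X A a y" and rest: "rtrancl_path (J X A) y ys z"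
      using Cons(2) by (cases rule: rtrancl_path.cases; auto)+
    obtain t where t: "{a,t} \<in> E" "{t,y} \<in> E" "{t,y} \<notin> A" "y \<in> X" using Jy unfolding J_def by blast
    have atA: "{a,t} \<in> A" using full_all[OF p(1) p(2) da t(1)] .
    have tX: "t \<notin> X" using opp_side[OF X t(1)] Cons(6) by simp
    let ?A1 = "A - {{a,t}}"
    note r1 = rem_result[OF Cons(4) Cons(5) atA]
    have ty1: "{t,y} \<notin> ?A1" using t(3) by simp
    note r2 = add_result[OF r1(1) r1(2) t(2) ty1]
    have rest': "rtrancl_path (J X (insert {t,y} ?A1)) y ys z"
      using J_transfer[OF X tX rest, of y a] Cons(3) by simp
    have dist: "distinct (y # ys)" using Cons(3) by simp
    show ?thesis using Cons.IH[OF rest' dist r2(1) r2(2) t(4) Cons(7)] .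
  qed
qed

lemma twofactor_exists:
  assumes bip: "bipartite V E" and s: "(A,a,b) \<in> S" and f: "full A a b"
  shows "\<exists>F. twofactor F"
proof -
  note p = state_profile[OF s]
  have da: "deg A a = 3" and db: "deg A b = 3" using f unfolding full_def by auto
  obtain X where X: "a \<in> X" "\<forall>e\<in>E. card (e \<inter> X) = 1" using side_exists[OF bip p(2)] by blast
  define Z where "Z = {z. (J X A)\<^sup>*\<^sup>* a z}"
  show ?thesis
  proof (cases "\<exists>z\<in>Z. {z,b} \<in> E")
    case True
    then obtain z where z: "(J X A)\<^sup>*\<^sup>* a z" "{z,b} \<in> E" unfolding Z_def by blast
    then obtain xs where "rtrancl_path (J X A) a xs z" using rtranclp_eq_rtrancl_path by metis
    then obtain xs' where xs': "rtrancl_path (J X A) a xs' z" "distinct (a # xs')"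
      using rtrancl_path_distinct by metis
    show ?thesis using flip_exists[OF X(2) xs' s f X(1) z(2)] .
  next
    case False
    have aZ: "a \<in> Z" unfolding Z_def by simp
    have ZV: "Z \<subseteq> V"
    proof
      fix z assume "z \<in> Z"
      then have "(J X A)\<^sup>*\<^sup>* a z" unfolding Z_def by simp
      then show "z \<in> V"
      proof (induction rule: rtranclp_induct)
        case base then show ?case using p(2) .
      next
        case (step y z) then show ?case unfolding J_def using edge_in_V by blast
      qed
    qed
    have ZX: "Z \<subseteq> X"
    proof
      fix z assume "z \<in> Z"
      then have "(J X A)\<^sup>*\<^sup>* a z" unfolding Z_def by simp
      then show "z \<in> X"
      proof (induction rule: rtranclp_induct)
        case base then show ?case using X(1) .
      next
        case (step y z) then show ?case unfolding J_def by blast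
      qed
    qed
    have finZ: "finite Z" using finite_subset[OF ZV finV] .
    define N where "N = {t \<in> V. \<exists>z\<in>Z. {z,t} \<in> E}"
    have finN: "finite N" unfolding N_def using finV by simp
    define f where "f t = (SOME m. {t,m} \<in> E \<and> {t,m} \<notin> A)" for t
    have Nprop: "deg A t = 2 \<and> {t, f t} \<in> E \<and> {t, f t} \<notin> A \<and> f t \<in> Z - {a}" if tN: "t \<in> N" for t
    proof -
      obtain z where z: "z \<in> Z" "{z,t} \<in> E" "t \<in> V" using tN unfolding N_def by blast
      have tX: "t \<notin> X" using opp_side[OF X(2) z(2)] ZX z(1) by auto
      have tb: "t \<noteq> b" using False z by auto
      have ta: "t \<noteq> a" using tX X(1) by auto
      have dt: "deg A t = 2" using p(4)[OF z(3) ta tb] .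
      obtain m where m: "{t,m} \<in> E" "{t,m} \<notin> A" using other_edge[OF p(1) z(3) dt] by metis
      have fm: "{t, f t} \<in> E \<and> {t, f t} \<notin> A" unfolding f_def using someI[of "\<lambda>m. {t,m} \<in> E \<and> {t,m} \<notin> A"] m by blast
      have fX: "f t \<in> X" using opp_side[OF X(2) fm[THEN conjunct1]] tX by simp
      have "J X A z (f t)" unfolding J_def using z ZX fX fm by (auto simp: insert_commute)
      then have "f t \<in> Z" using z(1) unfolding Z_def by (simp add: rtranclp.rtrancl_into_rtrancl)
      moreover have "f t \<noteq> a"
      proof
        assume "f t = a"
        then have "{a,t} \<in> E" using fm by (simp add: insert_commute)
        then have "{a,t} \<in> A" using full_all[OF p(1) p(2) da] by simp
        then show False using fm \<open>f t = a\<close> by (simp add: insert_commute)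
      qed
      ultimately show ?thesis using dt fm by simp
    qed
    have injf: "inj_on f N"
    proof (rule inj_onI)
      fix t1 t2 assume t: "t1 \<in> N" "t2 \<in> N" "f t1 = f t2"
      let ?m = "f t1"
      have e1: "{?m,t1} \<in> E" "{?m,t1} \<notin> A" using Nprop[OF t(1)] by (auto simp: insert_commute)
      have e2: "{?m,t2} \<in> E" "{?m,t2} \<notin> A" using Nprop[OF t(2)] t(3) by (auto simp: insert_commute)
      have mV: "?m \<in> V" using edge_in_V e1(1) by simp
      have mb: "?m \<noteq> b"
      proof
        assume "?m = b"
        then have "{?m,t1} \<in> A" using full_all[OF p(1) p(3) db] e1(1) by simp
        then show False using e1(2) by simp
      qed
      have ma: "?m \<noteq> a" using Nprop[OF t(1)] by simp
      have dm: "deg A ?m = 2" using p(4)[OF mV ma mb] .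
      obtain y where y: "\<And>z. {?m,z} \<in> E \<Longrightarrow> {?m,z} \<notin> A \<Longrightarrow> z = y" using other_edge[OF p(1) mV dm] by metis
      show "t1 = t2" using y[OF e1] y[OF e2] by simp
    qed
    have cardN: "card N \<le> card (Z - {a})"
    proof (rule card_inj_on_le[OF injf])
      show "f ` N \<subseteq> Z - {a}" using Nprop by auto
      show "finite (Z - {a})" using finZ by simp
    qed
    have cZa: "card (Z - {a}) = card Z - 1" using aZ finZ by simp
    have cZ1: "card Z \<ge> 1" using aZ finZ by (metis One_nat_def Suc_leI card_gt_0_iff empty_iff)
    have disj: "\<forall>i\<in>Z. \<forall>j\<in>Z. i \<noteq> j \<longrightarrow> incident E i \<inter> incident E j = {}"
    proof (intro ballI impI)
      fix i j assume ij: "i \<in> Z" "j \<in> Z" "i \<noteq> j"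
      show "incident E i \<inter> incident E j = {}"
      proof (rule equals0I)
        fix e assume "e \<in> incident E i \<inter> incident E j"
        then have e: "e \<in> E" "i \<in> e" "j \<in> e" unfolding incident_def by auto
        then obtain y where "e = {i,y}" using edge_at by blast
        then have "e = {i,j}" using e ij by auto
        then have "i \<in> X \<longleftrightarrow> j \<notin> X" using opp_side[OF X(2)] e by simp
        then show False using ij ZX by auto
      qed
    qed
    have c1: "card (\<Union>z\<in>Z. incident E z) = (\<Sum>z\<in>Z. card (incident E z))"
      using card_UN_disjoint[OF finZ _ disj] finite_incident[OF finE] by blast
    also have "\<dots> = (\<Sum>z\<in>Z. 3)" using ZV degE unfolding deg_def by (intro sum.cong) auto
    finally have c1': "card (\<Union>z\<in>Z. incident E z) = 3 * card Z" by simp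
    have sub: "(\<Union>z\<in>Z. incident E z) \<subseteq> (\<Union>t\<in>N. incident E t)"
    proof
      fix e assume "e \<in> (\<Union>z\<in>Z. incident E z)"
      then obtain z where z: "z \<in> Z" "e \<in> E" "z \<in> e" unfolding incident_def by auto
      then obtain t where t: "e = {z,t}" using edge_at by blast
      have "t \<in> V" using edge_in_V z(2) t by simp
      then have "t \<in> N" unfolding N_def using z t by blast
      moreover have "e \<in> incident E t" using z t unfolding incident_def by auto
      ultimately show "e \<in> (\<Union>t\<in>N. incident E t)" by blast
    qed
    have "card (\<Union>z\<in>Z. incident E z) \<le> card (\<Union>t\<in>N. incident E t)"
    proof (rule card_mono[OF _ sub])
      have "(\<Union>t\<in>N. incident E t) \<subseteq> E" unfolding incident_def by auto
      then show "finite (\<Union>t\<in>N. incident E t)" using finite_subset finE by blast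
    qed
    also have "\<dots> \<le> (\<Sum>t\<in>N. card (incident E t))" using card_UN_le[OF finN] .
    also have "\<dots> = (\<Sum>t\<in>N. 3)" using degE unfolding deg_def N_def by (intro sum.cong) auto
    finally have "3 * card Z \<le> 3 * card N" using c1' by simp
    then show ?thesis using cardN cZa cZ1 by linarith
  qed
qed

end


lemma edge_nth:
  assumes "distinct p" "e \<in> path_edges p" "i < length p" "p!i \<in> e"
  shows "(0 < i \<and> e = {p!(i-1), p!i}) \<or> (Suc i < length p \<and> e = {p!i, p!Suc i})"
proof -
  obtain j where j: "Suc j < length p" "e = {p!j, p!Suc j}" using path_edges_two[OF assms(2)] by blast
  have "p!i = p!j \<or> p!i = p!Suc j" using assms(4) j by auto
  then show ?thesis
  proof
    assume "p!i = p!j"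
    then have "i = j" using nth_eq_iff_index_eq[OF assms(1) assms(3), of j] j by simp
    then show ?thesis using j by simp
  next
    assume "p!i = p!Suc j"
    then have "i = Suc j" using nth_eq_iff_index_eq[OF assms(1) assms(3), of "Suc j"] j by simp
    then show ?thesis using j by simp
  qed
qed

lemma path_edge_in: "Suc i < length p \<Longrightarrow> {p!i, p!Suc i} \<in> path_edges p"
  unfolding path_edges_def by blast

lemma cycle_edges_sub: "c \<noteq> [] \<Longrightarrow> e \<in> cycle_edges c \<Longrightarrow> e \<subseteq> set c"
  unfolding cycle_edges_def using path_edges_subset by fastforce

lemma card_two_le: "card {a,b} \<le> 2"
  by (cases "a = b") auto

lemma card_le2_sub: "S \<subseteq> {a,b} \<Longrightarrow> card S \<le> 2"
  using card_mono[of "{a,b}" S] card_two_le[of a b] by fastforce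

lemma cycle_deg_le2:
  assumes "distinct c" "3 \<le> length c"
  shows "card (incident (cycle_edges c) x) \<le> 2"
proof (cases "x \<in> set c")
  case False
  then have "incident (cycle_edges c) x = {}" using cycle_edges_sub[of c] assms unfolding incident_def by fastforce
  then show ?thesis by simp
next
  case True
  then obtain i where i: "i < length c" "c!i = x" by (auto simp: in_set_conv_nth)
  have ne: "c \<noteq> []" using assms by auto
  have hd: "hd c = c!0" using ne by (simp add: hd_conv_nth)
  have lst: "last c = c!(length c - 1)" using ne by (simp add: last_conv_nth)
  have pe: "e \<in> path_edges c \<Longrightarrow> x \<in> e \<Longrightarrow> (0 < i \<and> e = {c!(i-1), x}) \<or> (Suc i < length c \<and> e = {x, c!Suc i})" for e
    using edge_nth[OF assms(1) _ i(1)] i(2) by blast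
  have inc: "incident (cycle_edges c) x \<subseteq> insert {last c, hd c} {e \<in> path_edges c. x \<in> e}"
    unfolding incident_def cycle_edges_def by auto
  show ?thesis
  proof (cases "i = 0")
    case True
    have "incident (cycle_edges c) x \<subseteq> {{last c, hd c}, {x, c!Suc i}}" using inc pe True by auto
    then show ?thesis by (rule card_le2_sub)
  next
    case False
    show ?thesis
    proof (cases "Suc i = length c")
      case True
      have "incident (cycle_edges c) x \<subseteq> {{last c, hd c}, {c!(i-1), x}}" using inc pe True by auto
      then show ?thesis by (rule card_le2_sub)
    next
      case False2: False
      have "x \<noteq> hd c" using hd i \<open>i \<noteq> 0\<close> nth_eq_iff_index_eq[OF assms(1) i(1), of 0] ne by auto
      moreover have "x \<noteq> last c" using lst i False2 nth_eq_iff_index_eq[OF assms(1) i(1), of "length c - 1"] ne by auto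
      ultimately have nl: "x \<notin> {last c, hd c}" by simp
      have "incident (cycle_edges c) x \<subseteq> {{c!(i-1), x}, {x, c!Suc i}}"
      proof
        fix e assume "e \<in> incident (cycle_edges c) x"
        then have "e \<in> insert {last c, hd c} {e \<in> path_edges c. x \<in> e}" "x \<in> e" using inc unfolding incident_def by auto
        then have "e \<in> path_edges c" "x \<in> e" using nl by auto
        then show "e \<in> {{c!(i-1), x}, {x, c!Suc i}}" using pe by blast
      qed
      then show ?thesis by (rule card_le2_sub)
    qed
  qed
qed

lemma last_edge:
  assumes "distinct p" "2 \<le> length p" "e \<in> path_edges p" "last p \<in> e"
  shows "e = {p!(length p - 2), last p}"
proof -
  define k where "k = length p - 1"
  have k: "k < length p" "Suc k = length p" "0 < k" "k - 1 = length p - 2" using assms(2) unfolding k_def by auto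
  have ne: "p \<noteq> []" using assms(2) by auto
  have l: "last p = p!k" using ne unfolding k_def by (simp add: last_conv_nth)
  have "(0 < k \<and> e = {p!(k-1), p!k}) \<or> (Suc k < length p \<and> e = {p!k, p!Suc k})"
    using edge_nth[OF assms(1) assms(3) k(1)] assms(4) l by simp
  then have "e = {p!(k-1), p!k}" using k(2) by auto
  then show ?thesis using l k(4) by simp
qed

lemma hd_edge:
  assumes "distinct p" "2 \<le> length p" "e \<in> path_edges p" "hd p \<in> e"
  shows "e = {hd p, p!1}"
proof -
  have ne: "p \<noteq> []" using assms(2) by auto
  have h: "hd p = p!0" using ne by (simp add: hd_conv_nth)
  show ?thesis using edge_nth[OF assms(1) assms(3), of 0] assms(2,4) h ne by auto
qed

lemma last_edge_in: "2 \<le> length p \<Longrightarrow> {p!(length p - 2), last p} \<in> path_edges p"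
proof -
  assume "2 \<le> length p"
  then have "Suc (length p - 2) < length p" "Suc (length p - 2) = length p - 1" by auto
  moreover have "p \<noteq> []" using \<open>2 \<le> length p\<close> by auto
  ultimately show ?thesis using path_edge_in[of "length p - 2" p] by (simp add: last_conv_nth)
qed

lemma hd_edge_in: "2 \<le> length p \<Longrightarrow> {hd p, p!1} \<in> path_edges p"
proof -
  assume "2 \<le> length p"
  then have "p \<noteq> []" "Suc 0 < length p" by auto
  then show ?thesis using path_edge_in[of 0 p] by (simp add: hd_conv_nth)
qed

lemma tadpole_last_inc:
  assumes "is_path F p" "2 \<le> length p" "set p \<inter> set c = {hd p}" "c \<noteq> []"
  shows "incident (cycle_edges c \<union> path_edges p) (last p) = {{p!(length p - 2), last p}}"
proof -
  have d: "distinct p" using assms(1) unfolding is_path_def by simp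
  define k where "k = length p - 1"
  have k: "k < length p" "0 < k" using assms(2) unfolding k_def by auto
  have ne: "p \<noteq> []" using assms(2) by auto
  have l: "last p = p!k" using ne unfolding k_def by (simp add: last_conv_nth)
  have h: "hd p = p!0" using ne by (simp add: hd_conv_nth)
  have "p!k \<noteq> p!0" using nth_eq_iff_index_eq[OF d k(1), of 0] k ne by simp
  then have lh: "last p \<noteq> hd p" using l h by simp
  have "last p \<in> set p" using l k(1) by simp
  then have lc: "last p \<notin> set c" using assms(3) lh by blast
  have 1: "e \<in> cycle_edges c \<Longrightarrow> last p \<notin> e" for e using cycle_edges_sub[OF assms(4), of e] lc by blast
  have 2: "e \<in> path_edges p \<Longrightarrow> last p \<in> e \<Longrightarrow> e = {p!(length p - 2), last p}" for e using last_edge[OF d assms(2)] by blast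
  have 3: "{p!(length p - 2), last p} \<in> path_edges p" using last_edge_in[OF assms(2)] .
  show ?thesis
  proof (rule set_eqI, rule iffI)
    fix e assume "e \<in> incident (cycle_edges c \<union> path_edges p) (last p)"
    then have "e \<in> cycle_edges c \<union> path_edges p" "last p \<in> e" unfolding incident_def by auto
    then show "e \<in> {{p!(length p - 2), last p}}" using 1 2 by blast
  next
    fix e assume "e \<in> {{p!(length p - 2), last p}}"
    then show "e \<in> incident (cycle_edges c \<union> path_edges p) (last p)" using 3 unfolding incident_def by auto
  qed
qed

lemma comp_closure:
  assumes LA: "L \<subseteq> A" and uX: "u \<in> X" and inc: "\<forall>x\<in>X. incident A x \<subseteq> L"
    and LX: "\<forall>e\<in>L. e \<subseteq> X" and reach: "\<forall>x\<in>X. (u,x) \<in> (adj_rel L)\<^sup>*"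
    and ne: "\<forall>e\<in>A. e \<noteq> {}"
  shows "comp_verts A u = X" "comp_edges A u = L"
proof -
  have 1: "comp_verts A u \<subseteq> X"
  proof
    fix x assume "x \<in> comp_verts A u"
    then have "(u,x) \<in> (adj_rel A)\<^sup>*" unfolding comp_verts_def by simp
    then show "x \<in> X"
    proof (induction rule: rtrancl_induct)
      case base then show ?case using uX .
    next
      case (step y z)
      then have "{y,z} \<in> A" unfolding adj_rel_def by simp
      then have "{y,z} \<in> L" using inc step.IH unfolding incident_def by auto
      then show ?case using LX by auto
    qed
  qed
  have 2: "X \<subseteq> comp_verts A u" using reach adj_rtrancl_mono[OF LA] unfolding comp_verts_def by blast
  show cv: "comp_verts A u = X" using 1 2 by simp
  show "comp_edges A u = L"
  proof (rule set_eqI, rule iffI)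
    fix e assume "e \<in> comp_edges A u"
    then have e: "e \<in> A" "e \<subseteq> X" unfolding comp_edges_def cv by auto
    then obtain x where "x \<in> e" using ne by blast
    then have "e \<in> incident A x" "x \<in> X" using e unfolding incident_def by auto
    then show "e \<in> L" using inc by auto
  next
    fix e assume "e \<in> L"
    then show "e \<in> comp_edges A u" unfolding comp_edges_def cv using LA LX by auto
  qed
qed

lemma comp_inc:
  assumes "x \<in> comp_verts A u" "edges2 A"
  shows "incident (comp_edges A u) x = incident A x"
proof (rule set_eqI, rule iffI)
  fix e assume "e \<in> incident (comp_edges A u) x"
  then show "e \<in> incident A x" unfolding incident_def comp_edges_def by auto
next
  fix e assume e: "e \<in> incident A x"
  then have eA: "e \<in> A" and xe: "x \<in> e" unfolding incident_def by auto
  obtain a b where ab: "a \<noteq> b" "e = {a,b}" using assms(2) eA unfolding edges2_def by blast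
  obtain y where y: "e = {x,y}" using ab xe by blast
  have "(x,y) \<in> adj_rel A" using eA y unfolding adj_rel_def by simp
  moreover have "(u,x) \<in> (adj_rel A)\<^sup>*" using assms(1) unfolding comp_verts_def by simp
  ultimately have "(u,y) \<in> (adj_rel A)\<^sup>*" using rtrancl.rtrancl_into_rtrancl by metis
  then have "y \<in> comp_verts A u" unfolding comp_verts_def by simp
  then have "e \<subseteq> comp_verts A u" using y assms(1) by simp
  then show "e \<in> incident (comp_edges A u) x" using eA xe unfolding incident_def comp_edges_def by simp
qed

lemma comp_same:
  assumes "w \<in> comp_verts A u"
  shows "comp_verts A w = comp_verts A u"
proof -
  have uw: "(u,w) \<in> (adj_rel A)\<^sup>*" using assms unfolding comp_verts_def by simp
  have wu: "(w,u) \<in> (adj_rel A)\<^sup>*" using adj_rtrancl_sym[OF uw] .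
  show ?thesis unfolding comp_verts_def using uw wu by (meson rtrancl_trans)
qed

lemma comp_edges_same: "w \<in> comp_verts A u \<Longrightarrow> comp_edges A w = comp_edges A u"
  unfolding comp_edges_def using comp_same[of w A u] by simp

lemma avoid_lemma:
  assumes step: "\<And>i. k \<le> i \<Longrightarrow> Suc i < length q \<Longrightarrow> q!Suc i \<in> Y \<Longrightarrow> q!i \<in> Y" and base: "q!k \<notin> Y"
  shows "k \<le> i \<Longrightarrow> i < length q \<Longrightarrow> q!i \<notin> Y"
proof (induction i)
  case 0 then show ?case using base by simp
next
  case (Suc i)
  show ?case
  proof (cases "k = Suc i")
    case True then show ?thesis using base by simp
  next
    case False
    then have "k \<le> i" using Suc by simp
    then show ?thesis using Suc step by auto
  qed
qed

lemma cycle_reach: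
  assumes "cycle_edges c \<subseteq> L" "x \<in> set c"
  shows "(last c, x) \<in> (adj_rel L)\<^sup>*"
proof -
  have ne: "c \<noteq> []" using assms by auto
  have "{last c, hd c} \<in> L" using assms unfolding cycle_edges_def by auto
  then have 1: "(last c, hd c) \<in> adj_rel L" unfolding adj_rel_def by simp
  obtain i where "i < length c" "c!i = x" using assms by (auto simp: in_set_conv_nth)
  then have "(c!0, x) \<in> (adj_rel L)\<^sup>*" using path_reach[of c L i] assms unfolding cycle_edges_def by auto
  then show ?thesis using 1 ne by (simp add: hd_conv_nth converse_rtrancl_into_rtrancl)
qed

lemma path_reach_mem:
  assumes "path_edges p \<subseteq> L" "x \<in> set p"
  shows "(hd p, x) \<in> (adj_rel L)\<^sup>*"
proof -
  obtain i where "i < length p" "p!i = x" using assms by (auto simp: in_set_conv_nth)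
  moreover have "p \<noteq> []" using assms(2) by auto
  ultimately show ?thesis using path_reach[OF assms(1)] by (auto simp: hd_conv_nth)
qed


lemma last_neq_hd: "distinct p \<Longrightarrow> 2 \<le> length p \<Longrightarrow> last p \<noteq> hd p"
proof -
  assume d: "distinct p" "2 \<le> length p"
  then have ne: "p \<noteq> []" and k: "length p - 1 < length p" "length p - 1 \<noteq> 0" by auto
  have "p!(length p - 1) \<noteq> p!0" using nth_eq_iff_index_eq[OF d(1) k(1), of 0] k ne by simp
  then show ?thesis using ne by (simp add: last_conv_nth hd_conv_nth)
qed

lemma card_minus1: "finite X \<Longrightarrow> a \<in> X \<Longrightarrow> card (X - {a}) = card X - 1"
  by simp

lemma walk_facts:
  assumes "walkprop G T b q"
  shows "distinct q" "2 \<le> length q" "hd q = b" "path_edges q \<subseteq> G" "last q \<in> T \<or> deg G (last q) \<noteq> 2"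
    "\<And>i. 0 < i \<Longrightarrow> i < length q - 1 \<Longrightarrow> q!i \<notin> T \<and> deg G (q!i) = 2"
    "\<And>i. i < length q - 1 \<Longrightarrow> incident G (q!i) \<subseteq> path_edges q"
  using assms unfolding walkprop_def by auto

lemma set_nth_lt_last:
  assumes "distinct q" "x \<in> set q" "x \<noteq> last q"
  obtains i where "i < length q - 1" "q!i = x"
proof -
  obtain i where i: "i < length q" "q!i = x" using assms(2) by (auto simp: in_set_conv_nth)
  have ne: "q \<noteq> []" using assms(2) by auto
  have "i \<noteq> length q - 1" using i assms(3) ne by (auto simp: last_conv_nth)
  then have "i < length q - 1" using i(1) by simp
  then show ?thesis using that i(2) by blast
qed

context cgraph begin

lemma edges2_sub: "A \<subseteq> E \<Longrightarrow> edges2 A" using edges2_subset[OF edges2E] .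

lemma cyc3:
  assumes AE: "A \<subseteq> E" and c3: "deg A v = 3" and e0: "{x0, v} \<in> A"
    and x0Y: "x0 \<in> Y" and vY: "v \<notin> Y"
    and closedY: "\<And>x y. x \<in> Y \<Longrightarrow> {x,y} \<in> A \<Longrightarrow> y \<in> Y \<or> (y = v \<and> x = x0)"
    and deg2: "\<And>x. x \<in> V \<Longrightarrow> x \<notin> Y \<Longrightarrow> x \<noteq> v \<Longrightarrow> deg A x = 2"
  shows "\<exists>c. is_cycle A c \<and> last c = v \<and> set c \<inter> Y = {} \<and> incident A v \<subseteq> insert {x0,v} (cycle_edges c)
     \<and> (\<forall>x\<in>set c. x \<noteq> v \<longrightarrow> incident A x \<subseteq> cycle_edges c)"
proof -
  have finA': "finite A" using finA[OF AE] .
  have e2A: "edges2 A" using edges2_sub[OF AE] .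
  have finI: "finite (incident A v)" using finite_incident[OF finA'] .
  have "card (incident A v - {{x0,v}}) = 2" using c3 e0 finI unfolding deg_def incident_def by simp
  then have "incident A v - {{x0,v}} \<noteq> {}" by (metis card.empty zero_neq_numeral)
  then obtain e1 where e1: "e1 \<in> incident A v" "e1 \<noteq> {x0,v}" by blast
  then have e1A: "e1 \<in> A" "v \<in> e1" unfolding incident_def by auto
  then obtain b1 where b1: "e1 = {v,b1}" using edge_at AE by blast
  have vb1E: "{v,b1} \<in> E" using e1A b1 AE by auto
  have b1v: "b1 \<noteq> v" using edge_neq[OF vb1E] by simp
  have b1V: "b1 \<in> V" using edge_in_V vb1E by simp
  have b1Y: "b1 \<notin> Y"
  proof
    assume "b1 \<in> Y"
    moreover have "{b1,v} \<in> A" using e1A b1 by (simp add: insert_commute)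
    ultimately have "v \<in> Y \<or> (v = v \<and> b1 = x0)" using closedY by blast
    then show False using vY e1(2) b1 by (auto simp: insert_commute)
  qed
  have b1x0: "b1 \<noteq> x0" using b1Y x0Y by auto
  have db1: "deg A b1 = 2" using deg2[OF b1V b1Y b1v] .
  define G where "G = A - {{v,b1}, {x0,v}}"
  have GA: "G \<subseteq> A" unfolding G_def by auto
  have finG: "finite G" using finA' GA finite_subset by blast
  have e2G: "edges2 G" using edges2_subset[OF e2A GA] .
  have incG: "incident G x = incident A x - {{v,b1},{x0,v}}" for x unfolding G_def incident_Diff by simp
  have nx0: "{x0,v} \<notin> incident A b1" using b1x0 b1v unfolding incident_def by auto
  have "incident G b1 = incident A b1 - {{v,b1}}"
  proof (rule set_eqI)
    fix e show "e \<in> incident G b1 \<longleftrightarrow> e \<in> incident A b1 - {{v,b1}}" using incG[of b1] nx0 by blast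
  qed
  moreover have "{v,b1} \<in> incident A b1" using e1A b1 unfolding incident_def by auto
  ultimately have dGb1: "deg G b1 = 1" using db1 finite_incident[OF finA'] unfolding deg_def by simp
  obtain q where q: "walkprop G {} b1 q" using walk_exists[OF finG e2G dGb1] by blast
  note qf = walk_facts[OF q]
  have qne: "q \<noteq> []" using qf(2) by auto
  have q0: "q!0 = b1" using qf(3) qne by (simp add: hd_conv_nth)
  have avoid: "i < length q \<Longrightarrow> q!i \<notin> Y" for i
  proof (rule avoid_lemma[of 0 q Y i])
    fix j assume j: "0 \<le> j" "Suc j < length q" "q!Suc j \<in> Y"
    have "{q!j, q!Suc j} \<in> G" using path_edge_in[OF j(2)] qf(4) by auto
    then have ed: "{q!Suc j, q!j} \<in> A" "{q!j, q!Suc j} \<noteq> {x0,v}" using GA unfolding G_def by (auto simp: insert_commute)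
    have "q!j \<in> Y \<or> (q!j = v \<and> q!Suc j = x0)" using closedY[OF j(3) ed(1)] .
    then show "q!j \<in> Y" using ed(2) by (auto simp: insert_commute)
  next
    show "q!0 \<notin> Y" using q0 b1Y by simp
  qed simp_all
  have qY: "set q \<inter> Y = {}" using avoid by (auto simp: in_set_conv_nth)
  define l where "l = length q"
  have l2: "2 \<le> l" using qf(2) l_def by simp
  have lastq: "last q = q!(l-1)" using qne l_def by (simp add: last_conv_nth)
  have le: "{q!(l-2), last q} \<in> path_edges q" using last_edge_in[OF qf(2)] l_def by simp
  have leA: "{q!(l-2), last q} \<in> A" using le qf(4) GA by auto
  have zV: "last q \<in> V" using edge_in_V leA AE by auto
  have "last q \<in> set q" using qne by simp
  then have zY: "last q \<notin> Y" using qY by blast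
  have zb1: "last q \<noteq> b1" using last_neq_hd[OF qf(1) qf(2)] qf(3) by simp
  have zv: "last q = v"
  proof (rule ccontr)
    assume zv: "last q \<noteq> v"
    have "deg A (last q) = 2" using deg2[OF zV zY zv] .
    moreover have "incident G (last q) = incident A (last q)" using incG[of "last q"] zv zb1 zY x0Y
      unfolding incident_def by auto
    ultimately have "deg G (last q) = 2" unfolding deg_def by simp
    then show False using qf(5) by simp
  qed
  have l3: "3 \<le> l"
  proof (rule ccontr)
    assume "\<not> 3 \<le> l"
    then have "l = 2" using l2 by simp
    then have "{q!0, last q} \<in> path_edges q" using le by simp
    then have "{b1, v} \<in> G" using q0 zv qf(4) by blast
    moreover have "{b1, v} = {v, b1}" by (rule insert_commute)
    ultimately show False unfolding G_def by simp
  qed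
  have ce: "cycle_edges q = insert {v, b1} (path_edges q)" unfolding cycle_edges_def using zv qf(3) by simp
  have cyc: "is_cycle A q" unfolding is_cycle_def using l3 l_def qf(1) ce qf(4) GA e1A b1 by auto
  have qlm2: "q!(l-2) \<noteq> b1"
  proof -
    have "l - 2 < length q" "l - 2 \<noteq> 0" using l3 l_def by auto
    then show ?thesis using nth_eq_iff_index_eq[OF qf(1), of "l-2" 0] q0 l_def qne by auto
  qed
  have qlm2v: "q!(l-2) \<noteq> v"
  proof -
    have "l - 2 < length q" "l - 1 < length q" "l - 2 \<noteq> l - 1" using l3 l_def by auto
    then show ?thesis using nth_eq_iff_index_eq[OF qf(1), of "l-2" "l-1"] zv lastq by auto
  qed
  have qlm2Y: "q!(l-2) \<noteq> x0"
  proof -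
    have "l - 2 < length q" using l3 l_def by auto
    then show ?thesis using avoid[of "l-2"] x0Y by auto
  qed
  have incv: "incident A v = {{x0,v}, {v,b1}, {q!(l-2), v}}"
  proof (rule card3_eq)
    show "finite (incident A v)" using finI .
    show "card (incident A v) = 3" using c3 unfolding deg_def .
    show "{x0,v} \<in> incident A v" "{v,b1} \<in> incident A v" using e0 e1A b1 unfolding incident_def by auto
    show "{q!(l-2), v} \<in> incident A v" using leA zv unfolding incident_def by auto
    show "{x0,v} \<noteq> {v,b1}" using e1(2) b1 by simp
    show "{x0,v} \<noteq> {q!(l-2), v}" using qlm2Y qlm2v by (auto simp: doubleton_eq_iff)
    show "{v,b1} \<noteq> {q!(l-2), v}" using qlm2 qlm2v by (auto simp: doubleton_eq_iff)
  qed
  have incvsub: "incident A v \<subseteq> insert {x0,v} (cycle_edges q)" using incv ce le zv by auto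
  have incx: "incident A x \<subseteq> cycle_edges q" if x: "x \<in> set q" "x \<noteq> v" for x
  proof -
    obtain i where i: "i < length q - 1" "q!i = x" using set_nth_lt_last[OF qf(1) x(1)] x(2) zv by metis
    have "incident G x \<subseteq> path_edges q" using qf(7)[OF i(1)] i(2) by simp
    moreover have "x \<noteq> x0" using x qY x0Y by auto
    ultimately show ?thesis using incG[of x] x(2) ce unfolding incident_def by auto
  qed
  show ?thesis using cyc zv qY incvsub incx by blast
qed

lemma cyc2:
  assumes AE: "A \<subseteq> E" and d2: "\<And>x. x \<in> V \<Longrightarrow> deg A x = 2" and uV: "u \<in> V"
  shows "\<exists>c. is_cycle A c \<and> last c = u \<and> (\<forall>x\<in>set c. incident A x \<subseteq> cycle_edges c)"
proof -
  have finA': "finite A" using finA[OF AE] .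
  have e2A: "edges2 A" using edges2_sub[OF AE] .
  have finI: "finite (incident A x)" for x using finite_incident[OF finA'] .
  have "card (incident A u) = 2" using d2[OF uV] unfolding deg_def .
  then have "incident A u \<noteq> {}" by (metis card.empty zero_neq_numeral)
  then obtain e1 where e1: "e1 \<in> incident A u" by blast
  then have e1A: "e1 \<in> A" "u \<in> e1" unfolding incident_def by auto
  then obtain b where b: "e1 = {u,b}" using edge_at AE by blast
  have ubE: "{u,b} \<in> E" using e1A b AE by auto
  have bu: "b \<noteq> u" using edge_neq[OF ubE] by simp
  have bV: "b \<in> V" using edge_in_V ubE by simp
  define G where "G = A - {{u,b}}"
  have GA: "G \<subseteq> A" unfolding G_def by auto
  have finG: "finite G" using finA' GA finite_subset by blast
  have e2G: "edges2 G" using edges2_subset[OF e2A GA] .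
  have incG: "incident G x = incident A x - {{u,b}}" for x unfolding G_def incident_Diff by simp
  have "{u,b} \<in> incident A b" using e1A b unfolding incident_def by auto
  then have dGb: "deg G b = 1" using d2[OF bV] finI incG[of b] unfolding deg_def by simp
  obtain q where q: "walkprop G {} b q" using walk_exists[OF finG e2G dGb] by blast
  note qf = walk_facts[OF q]
  have qne: "q \<noteq> []" using qf(2) by auto
  have q0: "q!0 = b" using qf(3) qne by (simp add: hd_conv_nth)
  define l where "l = length q"
  have l2: "2 \<le> l" using qf(2) l_def by simp
  have lastq: "last q = q!(l-1)" using qne l_def by (simp add: last_conv_nth)
  have le: "{q!(l-2), last q} \<in> path_edges q" using last_edge_in[OF qf(2)] l_def by simp
  have leA: "{q!(l-2), last q} \<in> A" using le qf(4) GA by auto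
  have zV: "last q \<in> V" using edge_in_V leA AE by auto
  have zb: "last q \<noteq> b" using last_neq_hd[OF qf(1) qf(2)] qf(3) by simp
  have zu: "last q = u"
  proof (rule ccontr)
    assume zu: "last q \<noteq> u"
    have "incident G (last q) = incident A (last q)" using incG[of "last q"] zu zb unfolding incident_def by auto
    then have "deg G (last q) = 2" using d2[OF zV] unfolding deg_def by simp
    then show False using qf(5) by simp
  qed
  have l3: "3 \<le> l"
  proof (rule ccontr)
    assume "\<not> 3 \<le> l"
    then have "l = 2" using l2 by simp
    then have "{q!0, last q} \<in> path_edges q" using le by simp
    then have "{b, u} \<in> G" using q0 zu qf(4) by blast
    moreover have "{b, u} = {u, b}" by (rule insert_commute)
    ultimately show False unfolding G_def by simp
  qed
  have ce: "cycle_edges q = insert {u, b} (path_edges q)" unfolding cycle_edges_def using zu qf(3) by simp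
  have cyc: "is_cycle A q" unfolding is_cycle_def using l3 l_def qf(1) ce qf(4) GA e1A b by auto
  have qlm2: "q!(l-2) \<noteq> b"
  proof -
    have "l - 2 < length q" "l - 2 \<noteq> 0" using l3 l_def by auto
    then show ?thesis using nth_eq_iff_index_eq[OF qf(1), of "l-2" 0] q0 l_def qne by auto
  qed
  have incu: "incident A u = {{u,b}, {q!(l-2), u}}"
  proof (rule card2_eq)
    show "finite (incident A u)" using finI .
    show "card (incident A u) = 2" using d2[OF uV] unfolding deg_def .
    show "{u,b} \<in> incident A u" using e1A b unfolding incident_def by auto
    show "{q!(l-2), u} \<in> incident A u" using leA zu unfolding incident_def by auto
    show "{u,b} \<noteq> {q!(l-2), u}" using qlm2 bu by (auto simp: doubleton_eq_iff)
  qed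
  have incx: "incident A x \<subseteq> cycle_edges q" if x: "x \<in> set q" for x
  proof (cases "x = u")
    case True then show ?thesis using incu ce le zu by auto
  next
    case False
    obtain i where i: "i < length q - 1" "q!i = x" using set_nth_lt_last[OF qf(1) x] False zu by metis
    have "incident G x \<subseteq> path_edges q" using qf(7)[OF i(1)] i(2) by simp
    then show ?thesis using incG[of x] ce unfolding incident_def by auto
  qed
  show ?thesis using cyc zu incx by blast
qed

end


context cgraph begin

lemma ne_edges: "A \<subseteq> E \<Longrightarrow> \<forall>e\<in>A. e \<noteq> {}"
  using edgeE by blast

lemma is_cycle_sub: "is_cycle A c \<Longrightarrow> cycle_edges c \<subseteq> L \<Longrightarrow> is_cycle L c"
  unfolding is_cycle_def by auto

lemma is_path_sub: "is_path A p \<Longrightarrow> path_edges p \<subseteq> L \<Longrightarrow> is_path L p"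
  unfolding is_path_def by auto

lemma classE_mem:
  assumes s: "(A,u,u) \<in> S"
  shows "(A,u,u) \<in> class_E V E"
proof -
  note p = state_profile[OF s]
  have d2: "\<And>x. x \<in> V \<Longrightarrow> deg A x = 2" using p(4) p(5) by (metis)
  obtain c where c: "is_cycle A c" "last c = u" "\<forall>x\<in>set c. incident A x \<subseteq> cycle_edges c"
    using cyc2[OF p(1) d2 p(2)] by blast
  have cne: "c \<noteq> []" using c(1) unfolding is_cycle_def by auto
  have uc: "u \<in> set c" using c(2) cne by auto
  have LA: "cycle_edges c \<subseteq> A" using c(1) unfolding is_cycle_def by simp
  have h2: "\<forall>e\<in>cycle_edges c. e \<subseteq> set c" using cycle_edges_sub[OF cne] by blast
  have h3: "\<forall>x\<in>set c. (u, x) \<in> (adj_rel (cycle_edges c))\<^sup>*" using cycle_reach[of c "cycle_edges c"] c(2) by auto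
  have cl: "comp_verts A u = set c" "comp_edges A u = cycle_edges c"
    using comp_closure[OF LA uc c(3) h2 h3 ne_edges[OF p(1)]] by auto
  have "cycle_graph (comp_verts A u) (comp_edges A u)"
    unfolding cycle_graph_def cl using is_cycle_sub[OF c(1)] by blast
  then show ?thesis using s unfolding class_E_def S_def by simp
qed

lemma tadpole_mem:
  assumes AE: "A \<subseteq> E" and da: "deg A a = 1" and dc: "deg A c = 3" and ac: "a \<noteq> c"
    and d2: "\<And>x. x \<in> V \<Longrightarrow> x \<noteq> a \<Longrightarrow> x \<noteq> c \<Longrightarrow> deg A x = 2"
  shows "tadpole_graph (comp_verts A a) (comp_edges A a) \<and> c \<in> comp_verts A a"
proof -
  have finA': "finite A" using finA[OF AE] .
  have e2A: "edges2 A" using edges2_sub[OF AE] .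
  obtain p where pw: "walkprop A {} a p" using walk_exists[OF finA' e2A da] by blast
  note pf = walk_facts[OF pw]
  have pne: "p \<noteq> []" using pf(2) by auto
  define l where "l = length p"
  have l2: "2 \<le> l" using pf(2) l_def by simp
  have le: "{p!(l-2), last p} \<in> path_edges p" using last_edge_in[OF pf(2)] l_def by simp
  have leA: "{p!(l-2), last p} \<in> A" using le pf(4) by auto
  have zV: "last p \<in> V" using edge_in_V leA AE by auto
  have za: "last p \<noteq> a" using last_neq_hd[OF pf(1) pf(2)] pf(3) by simp
  have zc: "last p = c"
  proof (rule ccontr)
    assume "last p \<noteq> c"
    then have "deg A (last p) = 2" using d2[OF zV za] by simp
    then show False using pf(5) by simp
  qed
  define Y where "Y = set p - {c}"
  define x0 where "x0 = p!(l-2)"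
  have lastp: "last p = p!(l-1)" using pne l_def by (simp add: last_conv_nth)
  have x0c: "x0 \<noteq> c"
  proof -
    have "l - 2 < length p" "l - 1 < length p" "l - 2 \<noteq> l - 1" using l2 l_def by auto
    then show ?thesis using nth_eq_iff_index_eq[OF pf(1), of "l-2" "l-1"] zc lastp x0_def by auto
  qed
  have x0Y: "x0 \<in> Y" unfolding Y_def x0_def using x0c x0_def l2 l_def by auto
  have cY: "c \<notin> Y" unfolding Y_def by simp
  have e0: "{x0, c} \<in> A" using leA zc x0_def by simp
  have incY: "x \<in> Y \<Longrightarrow> incident A x \<subseteq> path_edges p" for x
  proof -
    assume "x \<in> Y"
    then have "x \<in> set p" "x \<noteq> last p" unfolding Y_def using zc by auto
    then obtain i where i: "i < length p - 1" "p!i = x" using set_nth_lt_last[OF pf(1)] by metis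
    show ?thesis using pf(7)[OF i(1)] i(2) by simp
  qed
  have closedY: "y \<in> Y \<or> (y = c \<and> x = x0)" if x: "x \<in> Y" and xy: "{x,y} \<in> A" for x y
  proof -
    have "{x,y} \<in> path_edges p" using incY[OF x] xy unfolding incident_def by auto
    then have yp: "y \<in> set p" using path_edges_subset by blast
    show ?thesis
    proof (cases "y = c")
      case True
      have "{x,y} = {p!(length p - 2), last p}" using last_edge[OF pf(1) pf(2) \<open>{x,y} \<in> path_edges p\<close>] True zc by simp
      then have "x = x0" using True zc x cY x0_def l_def by (auto simp: doubleton_eq_iff)
      then show ?thesis using True by simp
    next
      case False then show ?thesis using yp unfolding Y_def by simp
    qed
  qed
  have aY: "a \<in> Y" unfolding Y_def using pf(3) pne ac by auto
  have deg2Y: "deg A x = 2" if "x \<in> V" "x \<notin> Y" "x \<noteq> c" for x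
    using d2[OF that(1)] that aY by auto
  obtain c1 where c1: "is_cycle A c1" "last c1 = c" "set c1 \<inter> Y = {}" "incident A c \<subseteq> insert {x0,c} (cycle_edges c1)"
    "\<forall>x\<in>set c1. x \<noteq> c \<longrightarrow> incident A x \<subseteq> cycle_edges c1"
    using cyc3[OF AE dc e0 x0Y cY closedY deg2Y] by blast
  have c1ne: "c1 \<noteq> []" using c1(1) unfolding is_cycle_def by auto
  define X where "X = set c1 \<union> set p"
  define L where "L = cycle_edges c1 \<union> path_edges p"
  have LA: "L \<subseteq> A" unfolding L_def using c1(1) pf(4) unfolding is_cycle_def by auto
  have aX: "a \<in> X" unfolding X_def using pf(3) pne by auto
  have cp: "c \<in> set p" using zc pne by auto
  have e0L: "{x0,c} \<in> L" unfolding L_def using le zc x0_def by simp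
  have h1: "\<forall>x\<in>X. incident A x \<subseteq> L"
    proof
      fix x assume "x \<in> X"
      show "incident A x \<subseteq> L"
      proof (cases "x = c")
        case True then show ?thesis using c1(4) e0L unfolding L_def by auto
      next
        case False
        show ?thesis
        proof (cases "x \<in> set p")
          case True
          then have "x \<in> Y" unfolding Y_def using False by simp
          then show ?thesis using incY unfolding L_def by auto
        next
          case False2: False
          then have "x \<in> set c1" using \<open>x \<in> X\<close> unfolding X_def by simp
          then show ?thesis using c1(5) False unfolding L_def by auto
        qed
      qed
    qed
  have h2: "\<forall>e\<in>L. e \<subseteq> X" unfolding L_def X_def using cycle_edges_sub[OF c1ne] path_edges_subset by blast
  have h3: "\<forall>x\<in>X. (a, x) \<in> (adj_rel L)\<^sup>*"
    proof
      fix x assume "x \<in> X"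
      have pL: "path_edges p \<subseteq> L" unfolding L_def by simp
      have cL: "cycle_edges c1 \<subseteq> L" unfolding L_def by simp
      have ac': "(a, c) \<in> (adj_rel L)\<^sup>*" using path_reach_mem[OF pL cp] pf(3) by simp
      show "(a, x) \<in> (adj_rel L)\<^sup>*"
      proof (cases "x \<in> set p")
        case True then show ?thesis using path_reach_mem[OF pL True] pf(3) by simp
      next
        case False
        then have "x \<in> set c1" using \<open>x \<in> X\<close> unfolding X_def by simp
        then have "(c, x) \<in> (adj_rel L)\<^sup>*" using cycle_reach[OF cL] c1(2) by metis
        then show ?thesis using ac' rtrancl_trans by metis
      qed
    qed
  have cl: "comp_verts A a = X" "comp_edges A a = L"
    using comp_closure[OF LA aX h1 h2 h3 ne_edges[OF AE]] by auto
  have tad: "tadpole_graph X L"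
    unfolding tadpole_graph_def
  proof (intro exI conjI)
    show "is_cycle L c1" using is_cycle_sub[OF c1(1)] unfolding L_def by simp
    have pp: "is_path A p" unfolding is_path_def using pne pf(1) pf(4) by simp
    show "is_path L (rev p)" using is_path_sub[of A "rev p" L] pp unfolding is_path_def L_def
      by (simp add: path_edges_rev)
    show "2 \<le> length (rev p)" using pf(2) by simp
    have hr: "hd (rev p) = c" using zc pne by (simp add: hd_rev)
    have "set (rev p) \<inter> set c1 = {c}"
    proof
      show "set (rev p) \<inter> set c1 \<subseteq> {c}" using c1(3) unfolding Y_def by auto
      show "{c} \<subseteq> set (rev p) \<inter> set c1" using cp c1(2) c1ne by auto
    qed
    then show "set (rev p) \<inter> set c1 = {hd (rev p)}" using hr by simp
    show "X = set c1 \<union> set (rev p)" unfolding X_def by simp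
    show "L = cycle_edges c1 \<union> path_edges (rev p)" unfolding L_def by (simp add: path_edges_rev)
  qed
  have "c \<in> X" unfolding X_def using cp by simp
  then show ?thesis using tad cl by simp
qed

lemma classT_mem:
  assumes s: "(A,u,v) \<in> S" and nf: "\<not> full A u v" and uv: "u \<noteq> v"
  shows "(A,u,v) \<in> class_T V E"
proof -
  note p = state_profile[OF s]
  have "(deg A u = 1 \<and> deg A v = 3) \<or> (deg A u = 3 \<and> deg A v = 1)" using p(6)[OF uv] nf unfolding full_def by auto
  then have "tadpole_graph (comp_verts A u) (comp_edges A u)"
  proof
    assume d: "deg A u = 1 \<and> deg A v = 3"
    show ?thesis using tadpole_mem[OF p(1) _ _ uv] d p(4) by blast
  next
    assume d: "deg A u = 3 \<and> deg A v = 1"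
    have "tadpole_graph (comp_verts A v) (comp_edges A v) \<and> u \<in> comp_verts A v"
      using tadpole_mem[OF p(1) _ _ uv[symmetric]] d p(4) by blast
    then show ?thesis using comp_same[of u A v] comp_edges_same[of u A v] by simp
  qed
  then show ?thesis using s unfolding class_T_def S_def by simp
qed

lemma full_not_ET:
  assumes s: "(A,u,v) \<in> S" and f: "full A u v"
  shows "(A,u,v) \<notin> class_E V E \<union> class_T V E"
proof
  note p = state_profile[OF s]
  have du: "deg A u = 3" and dv: "deg A v = 3" using f unfolding full_def by auto
  have e2A: "edges2 A" using edges2_sub[OF p(1)] .
  have uc: "u \<in> comp_verts A u" unfolding comp_verts_def by simp
  assume "(A,u,v) \<in> class_E V E \<union> class_T V E"
  then show False
  proof
    assume "(A,u,v) \<in> class_E V E"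
    then have "cycle_graph (comp_verts A u) (comp_edges A u)" unfolding class_E_def by simp
    then obtain c where c: "is_cycle (comp_edges A u) c" "comp_verts A u = set c" "comp_edges A u = cycle_edges c"
      unfolding cycle_graph_def by blast
    have "deg A u = card (incident (cycle_edges c) u)" using comp_inc[OF uc e2A] c(3) unfolding deg_def by simp
    also have "\<dots> \<le> 2" using c(1) unfolding is_cycle_def using cycle_deg_le2[of c u] by simp
    finally show False using du by simp
  next
    assume "(A,u,v) \<in> class_T V E"
    then have "tadpole_graph (comp_verts A u) (comp_edges A u)" unfolding class_T_def by simp
    then obtain c q where t: "is_cycle (comp_edges A u) c" "is_path (comp_edges A u) q" "2 \<le> length q"
      "set q \<inter> set c = {hd q}" "comp_verts A u = set c \<union> set q" "comp_edges A u = cycle_edges c \<union> path_edges q"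
      unfolding tadpole_graph_def by blast
    have cne: "c \<noteq> []" using t(1) unfolding is_cycle_def by auto
    have qne: "q \<noteq> []" using t(3) by auto
    have xc: "last q \<in> comp_verts A u" using t(5) qne by auto
    have inc1: "incident A (last q) = {{q!(length q - 2), last q}}"
      using comp_inc[OF xc e2A] tadpole_last_inc[OF t(2) t(3) t(4) cne] t(6) by simp
    then have d1: "deg A (last q) = 1" unfolding deg_def by simp
    have "{q!(length q - 2), last q} \<in> A" using inc1 unfolding incident_def by auto
    then have xV: "last q \<in> V" using edge_in_V p(1) by auto
    show False
    proof (cases "last q = u \<or> last q = v")
      case True then show ?thesis using d1 du dv by auto
    next
      case False then show ?thesis using p(4)[OF xV] d1 by auto
    qed
  qed
qed

end


context cgraph begin

definition wk :: "'a set set \<Rightarrow> 'a \<Rightarrow> 'a \<Rightarrow> 'a \<Rightarrow> 'a list \<Rightarrow> bool" where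
  "wk A u v b p \<longleftrightarrow> distinct p \<and> 2 \<le> length p \<and> hd p = u \<and> p!1 = b \<and> path_edges p \<subseteq> A \<and>
    (\<forall>i. 0 < i \<longrightarrow> i < length p - 1 \<longrightarrow> p!i \<noteq> v \<and> p!i \<noteq> u \<and> incident A (p!i) \<subseteq> path_edges p) \<and>
    (last p = v \<or> (3 \<le> length p \<and> last p \<noteq> v \<and> last p \<noteq> b \<and> {u, last p} \<in> A \<and>
       incident A (last p) = {{p!(length p - 2), last p}, {u, last p}}))"

lemma edge_two: "A \<subseteq> E \<Longrightarrow> e \<in> A \<Longrightarrow> u \<in> e \<Longrightarrow> z \<in> e \<Longrightarrow> u \<noteq> z \<Longrightarrow> e = {u,z}"
proof -
  assume h: "A \<subseteq> E" "e \<in> A" "u \<in> e" "z \<in> e" "u \<noteq> z"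
  obtain a b where "e = {a,b}" using edgeE h(1,2) by blast
  then show ?thesis using h(3-5) by auto
qed

lemma walk33:
  assumes s: "(A,u,v) \<in> S" and f: "full A u v" and ub: "{u,b} \<in> A"
  shows "\<exists>p. wk A u v b p"
proof -
  note pr = state_profile[OF s]
  have AE: "A \<subseteq> E" using pr(1) .
  have finA': "finite A" using finA[OF AE] .
  have e2A: "edges2 A" using edges2_sub[OF AE] .
  have uv: "u \<noteq> v" using f pr(5) unfolding full_def by auto
  define R where "R = incident A u - {{u,b}}"
  define G where "G = A - R"
  have GA: "G \<subseteq> A" unfolding G_def by auto
  have finG: "finite G" using finA' GA finite_subset by blast
  have e2G: "edges2 G" using edges2_subset[OF e2A GA] .
  have incG: "incident G x = incident A x - R" for x unfolding G_def incident_Diff by simp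
  have incGu: "incident G u = {{u,b}}"
  proof (rule set_eqI)
    fix e show "e \<in> incident G u \<longleftrightarrow> e \<in> {{u,b}}" using incG[of u] ub unfolding R_def incident_def by auto
  qed
  have dGu: "deg G u = 1" unfolding deg_def incGu by simp
  obtain p where pw: "walkprop G {v} u p" using walk_exists[OF finG e2G dGu] by blast
  note pf = walk_facts[OF pw]
  have pne: "p \<noteq> []" using pf(2) by auto
  have pA: "path_edges p \<subseteq> A" using pf(4) GA by auto
  have "{hd p, p!1} \<in> path_edges p" using hd_edge_in[OF pf(2)] .
  then have "{u, p!1} \<in> incident G u" using pf(3) pf(4) unfolding incident_def by auto
  then have "{u, p!1} = {u,b}" using incGu by simp
  then have p1: "p!1 = b" by (auto simp: doubleton_eq_iff)
  have noR: "incident G x = incident A x" if xV: "x \<in> V" and xu: "x \<noteq> u" and xv: "x \<noteq> v" and dG: "deg G x = 2" for x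
  proof (rule ccontr)
    assume ne: "incident G x \<noteq> incident A x"
    have sub: "incident G x \<subseteq> incident A x" using incG by auto
    then have "incident G x \<subset> incident A x" using ne by auto
    then have "card (incident G x) < card (incident A x)" using psubset_card_mono finite_incident[OF finA'] by blast
    then show False using dG pr(4)[OF xV xu xv] unfolding deg_def by simp
  qed
  have inV: "x \<in> set p \<Longrightarrow> x \<in> V" for x
  proof -
    assume "x \<in> set p"
    then obtain e where "e \<in> path_edges p" "x \<in> e" using path_vertex_in_edge[OF pf(2)] by blast
    then show "x \<in> V" using pA AE E_sub by blast
  qed
  have int: "p!i \<noteq> v \<and> p!i \<noteq> u \<and> incident A (p!i) \<subseteq> path_edges p" if i: "0 < i" "i < length p - 1" for i
  proof -
    have a: "p!i \<noteq> v" "deg G (p!i) = 2" using pf(6)[OF i] by auto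
    have b': "p!i \<noteq> u"
    proof
      assume "p!i = u"
      then have "p!i = p!0" using pf(3) pne by (simp add: hd_conv_nth)
      then show False using nth_eq_iff_index_eq[OF pf(1), of i 0] i pne by auto
    qed
    have "p!i \<in> V" using inV i by simp
    then have "incident G (p!i) = incident A (p!i)" using noR b' a by blast
    then show ?thesis using a b' pf(7)[of i] i by simp
  qed
  have last: "last p = v \<or> (3 \<le> length p \<and> last p \<noteq> v \<and> last p \<noteq> b \<and> {u, last p} \<in> A \<and>
       incident A (last p) = {{p!(length p - 2), last p}, {u, last p}})"
  proof (cases "last p = v")
    case True then show ?thesis by simp
  next
    case False
    define z where "z = last p"
    have zd: "deg G z \<noteq> 2" using pf(5) False z_def by simp
    have zu: "z \<noteq> u" using last_neq_hd[OF pf(1) pf(2)] pf(3) z_def by simp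
    have zV: "z \<in> V" using inV pne z_def by simp
    have dz: "deg A z = 2" using pr(4)[OF zV zu] False z_def by simp
    have "incident G z \<noteq> incident A z" using zd dz unfolding deg_def by auto
    then obtain e where e: "e \<in> incident A z" "e \<in> R" using incG[of z] by auto
    then have eA: "e \<in> A" "u \<in> e" "z \<in> e" "e \<noteq> {u,b}" unfolding R_def incident_def by auto
    have ez: "e = {u,z}" using edge_two[OF AE eA(1) eA(2) eA(3) zu[symmetric]] .
    have zb: "z \<noteq> b" using eA(4) ez by auto
    have l3: "3 \<le> length p"
    proof (rule ccontr)
      assume "\<not> 3 \<le> length p"
      then have "length p = 2" using pf(2) by simp
      then have "z = p!1" using z_def pne by (simp add: last_conv_nth)
      then show False using zb p1 by simp
    qed
    have ze: "{p!(length p - 2), z} \<in> A" using last_edge_in[OF pf(2)] pA z_def by auto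
    have pl2: "p!(length p - 2) \<noteq> u"
    proof
      assume "p!(length p - 2) = u"
      then have "p!(length p - 2) = p!0" using pf(3) pne by (simp add: hd_conv_nth)
      moreover have "length p - 2 < length p" "length p - 2 \<noteq> 0" using l3 by auto
      ultimately show False using nth_eq_iff_index_eq[OF pf(1), of "length p - 2" 0] pne by auto
    qed
    have "incident A z = {{p!(length p - 2), z}, {u,z}}"
    proof (rule card2_eq)
      show "finite (incident A z)" using finite_incident[OF finA'] .
      show "card (incident A z) = 2" using dz unfolding deg_def .
      show "{p!(length p - 2), z} \<in> incident A z" using ze unfolding incident_def by simp
      show "{u,z} \<in> incident A z" using e ez by simp
      show "{p!(length p - 2), z} \<noteq> {u,z}" using pl2 zu by (auto simp: doubleton_eq_iff)
    qed
    then show ?thesis using l3 False zb eA ez z_def by simp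
  qed
  have "wk A u v b p" unfolding wk_def using pf(1,2,3) p1 pA int last by blast
  then show ?thesis by blast
qed

lemma wk_facts:
  assumes "wk A u v b p"
  shows "distinct p" "2 \<le> length p" "hd p = u" "p!1 = b" "path_edges p \<subseteq> A"
    "\<And>i. 0 < i \<Longrightarrow> i < length p - 1 \<Longrightarrow> p!i \<noteq> v \<and> p!i \<noteq> u \<and> incident A (p!i) \<subseteq> path_edges p"
    "last p = v \<or> (3 \<le> length p \<and> last p \<noteq> v \<and> last p \<noteq> b \<and> {u, last p} \<in> A \<and>
       incident A (last p) = {{p!(length p - 2), last p}, {u, last p}})"
  using assms unfolding wk_def by auto

lemma wk_inner:
  assumes w: "wk A u v b p" and x: "x \<in> set p" "x \<noteq> u" "x \<noteq> last p"
  shows "incident A x \<subseteq> path_edges p \<and> x \<noteq> v"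
proof -
  note wf = wk_facts[OF w]
  have pne: "p \<noteq> []" using wf(2) by auto
  obtain i where i: "i < length p - 1" "p!i = x" using set_nth_lt_last[OF wf(1) x(1) x(3)] by metis
  have "i \<noteq> 0"
  proof
    assume "i = 0"
    then have "x = u" using i wf(3) pne by (simp add: hd_conv_nth)
    then show False using x(2) by simp
  qed
  then show ?thesis using wf(6)[of i] i by simp
qed

lemma wk_disj:
  assumes w1: "wk A u v b p" and w2: "wk A u v b' q" and bb: "b \<noteq> b'"
    and lp: "last p = v" and lq: "last q = v" and uv: "u \<noteq> v"
  shows "set q \<inter> (set p - {u,v}) = {}"
proof -
  note pf = wk_facts[OF w1]
  note qf = wk_facts[OF w2]
  define Y where "Y = set p - {u,v}"
  have pne: "p \<noteq> []" and qne: "q \<noteq> []" using pf(2) qf(2) by auto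
  have incY: "x \<in> Y \<Longrightarrow> incident A x \<subseteq> path_edges p" for x
    using wk_inner[OF w1, of x] lp unfolding Y_def by auto
  have q1: "q!1 \<notin> Y"
  proof
    assume "q!1 \<in> Y"
    moreover have "{q!0, q!1} \<in> path_edges q" using path_edge_in[of 0 q] qf(2) by simp
    ultimately have "{q!0, q!1} \<in> path_edges p" using incY qf(5) unfolding incident_def by auto
    moreover have "q!0 = u" using qf(3) qne by (simp add: hd_conv_nth)
    ultimately have "{u, q!1} = {hd p, p!1}" using hd_edge[OF pf(1) pf(2)] pf(3) by simp
    then have "q!1 = p!1" using pf(3) by (auto simp: doubleton_eq_iff)
    then show False using pf(4) qf(4) bb by simp
  qed
  have av: "q!i \<notin> Y" if "1 \<le> i" "i < length q" for i
  proof (rule avoid_lemma[of 1 q Y i])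
    fix j assume j: "1 \<le> j" "Suc j < length q" "q!Suc j \<in> Y"
    have e: "{q!j, q!Suc j} \<in> A" using path_edge_in[OF j(2)] qf(5) by auto
    have "{q!j, q!Suc j} \<in> path_edges p" using incY[OF j(3)] e unfolding incident_def by auto
    then have qj: "q!j \<in> set p" using path_edges_subset by blast
    have "q!j \<noteq> u"
    proof
      assume "q!j = u"
      then have "q!j = q!0" using qf(3) qne by (simp add: hd_conv_nth)
      then show False using nth_eq_iff_index_eq[OF qf(1), of j 0] j qne by auto
    qed
    moreover have "q!j \<noteq> v"
    proof
      assume "q!j = v"
      then have "q!j = q!(length q - 1)" using lq qne by (simp add: last_conv_nth)
      then show False using nth_eq_iff_index_eq[OF qf(1), of j "length q - 1"] j qne by auto
    qed
    ultimately show "q!j \<in> Y" using qj unfolding Y_def by simp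
  next
    show "q!1 \<notin> Y" by (rule q1)
  qed (use that in simp_all)
  show ?thesis
  proof (rule equals0I)
    fix x assume "x \<in> set q \<inter> (set p - {u,v})"
    then obtain i where i: "i < length q" "q!i = x" "x \<in> Y" unfolding Y_def by (auto simp: in_set_conv_nth)
    have "i \<noteq> 0"
    proof
      assume "i = 0"
      then have "x = u" using i qf(3) qne by (simp add: hd_conv_nth)
      then show False using i(3) unfolding Y_def by simp
    qed
    then show False using av[of i] i by simp
  qed
qed

end


context cgraph begin

lemma wk_pre_last:
  assumes w: "wk A u v b p" and lp: "last p = v"
  shows "p!(length p - 2) \<in> set p" "p!(length p - 2) \<noteq> v" "p!(length p - 2) = u \<Longrightarrow> b = v"
    "{p!(length p - 2), v} \<in> path_edges p"
proof -
  note pf = wk_facts[OF w]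
  have pne: "p \<noteq> []" using pf(2) by auto
  show "p!(length p - 2) \<in> set p" using pf(2) by simp
  have lv: "v = p!(length p - 1)" using lp pne by (simp add: last_conv_nth)
  show "p!(length p - 2) \<noteq> v"
  proof
    assume "p!(length p - 2) = v"
    then have "p!(length p - 2) = p!(length p - 1)" using lv by simp
    moreover have "length p - 2 < length p" "length p - 1 < length p" "length p - 2 \<noteq> length p - 1" using pf(2) by auto
    ultimately show False using nth_eq_iff_index_eq[OF pf(1), of "length p - 2" "length p - 1"] by simp
  qed
  show "b = v" if "p!(length p - 2) = u"
  proof -
    have "p!(length p - 2) = p!0" using that pf(3) pne by (simp add: hd_conv_nth)
    then have "length p - 2 = 0" using nth_eq_iff_index_eq[OF pf(1), of "length p - 2" 0] pf(2) pne by auto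
    then have "length p = 2" using pf(2) by simp
    then show ?thesis using pf(4) lv by simp
  qed
  show "{p!(length p - 2), v} \<in> path_edges p" using last_edge_in[OF pf(2)] lp by simp
qed

lemma caseTheta:
  assumes s: "(A,u,v) \<in> S" and f: "full A u v"
    and w1: "wk A u v b1 P1" and w2: "wk A u v b2 P2" and w3: "wk A u v b3 P3"
    and l1: "last P1 = v" and l2: "last P2 = v" and l3: "last P3 = v"
    and incu: "incident A u = {{u,b1},{u,b2},{u,b3}}" and d: "b1 \<noteq> b2" "b1 \<noteq> b3" "b2 \<noteq> b3"
  shows "theta_graph (comp_verts A u) (comp_edges A u)"
proof -
  note pr = state_profile[OF s]
  have AE: "A \<subseteq> E" using pr(1) .
  have finA': "finite A" using finA[OF AE] .
  have uv: "u \<noteq> v" using f pr(5) unfolding full_def by auto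
  have dv: "deg A v = 3" using f unfolding full_def by simp
  note f1 = wk_facts[OF w1] and f2 = wk_facts[OF w2] and f3 = wk_facts[OF w3]
  have ne1: "P1 \<noteq> []" and ne2: "P2 \<noteq> []" and ne3: "P3 \<noteq> []" using f1(2) f2(2) f3(2) by auto
  have D12: "set P2 \<inter> (set P1 - {u,v}) = {}" using wk_disj[OF w1 w2 d(1) l1 l2 uv] .
  have D21: "set P1 \<inter> (set P2 - {u,v}) = {}" using wk_disj[OF w2 w1 d(1)[symmetric] l2 l1 uv] .
  have D13: "set P3 \<inter> (set P1 - {u,v}) = {}" using wk_disj[OF w1 w3 d(2) l1 l3 uv] .
  have D31: "set P1 \<inter> (set P3 - {u,v}) = {}" using wk_disj[OF w3 w1 d(2)[symmetric] l3 l1 uv] .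
  have D23: "set P3 \<inter> (set P2 - {u,v}) = {}" using wk_disj[OF w2 w3 d(3) l2 l3 uv] .
  have D32: "set P2 \<inter> (set P3 - {u,v}) = {}" using wk_disj[OF w3 w2 d(3)[symmetric] l3 l2 uv] .
  have u1: "u \<in> set P1" using hd_in_set[OF ne1] f1(3) by simp
  have u2: "u \<in> set P2" using hd_in_set[OF ne2] f2(3) by simp
  have u3: "u \<in> set P3" using hd_in_set[OF ne3] f3(3) by simp
  have v1: "v \<in> set P1" using last_in_set[OF ne1] l1 by simp
  have v2: "v \<in> set P2" using last_in_set[OF ne2] l2 by simp
  have v3: "v \<in> set P3" using last_in_set[OF ne3] l3 by simp
  have I12: "set P1 \<inter> set P2 = {u,v}" using D12 u1 u2 v1 v2 by blast
  have I13: "set P1 \<inter> set P3 = {u,v}" using D13 u1 u3 v1 v3 by blast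
  have I23: "set P2 \<inter> set P3 = {u,v}" using D23 u2 u3 v2 v3 by blast
  have N12: "P1 \<noteq> P2" using f1(4) f2(4) d by auto
  have N13: "P1 \<noteq> P3" using f1(4) f3(4) d by auto
  have N23: "P2 \<noteq> P3" using f2(4) f3(4) d by auto
  define X where "X = set P1 \<union> set P2 \<union> set P3"
  define L where "L = path_edges P1 \<union> path_edges P2 \<union> path_edges P3"
  have LA: "L \<subseteq> A" unfolding L_def using f1(5) f2(5) f3(5) by auto
  have uX: "u \<in> X" unfolding X_def using u1 by simp
  note y1 = wk_pre_last[OF w1 l1] and y2 = wk_pre_last[OF w2 l2] and y3 = wk_pre_last[OF w3 l3]
  define z1 where "z1 = P1!(length P1 - 2)"
  define z2 where "z2 = P2!(length P2 - 2)"
  define z3 where "z3 = P3!(length P3 - 2)"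
  have z12: "z1 \<noteq> z2"
  proof
    assume eq: "z1 = z2"
    show False
    proof (cases "z1 = u")
      case True
      then have "b1 = v" "b2 = v" using y1(3) y2(3) eq unfolding z1_def z2_def by auto
      then show False using d by simp
    next
      case False
      then have "z1 \<in> set P1 - {u,v}" using y1(1,2) unfolding z1_def by simp
      moreover have "z1 \<in> set P2" using eq y2(1) unfolding z2_def by simp
      ultimately show False using D21 D12 by blast
    qed
  qed
  have z13: "z1 \<noteq> z3"
  proof
    assume eq: "z1 = z3"
    show False
    proof (cases "z1 = u")
      case True
      then have "b1 = v" "b3 = v" using y1(3) y3(3) eq unfolding z1_def z3_def by auto
      then show False using d by simp
    next
      case False
      then have "z1 \<in> set P1 - {u,v}" using y1(1,2) unfolding z1_def by simp
      moreover have "z1 \<in> set P3" using eq y3(1) unfolding z3_def by simp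
      ultimately show False using D13 by blast
    qed
  qed
  have z23: "z2 \<noteq> z3"
  proof
    assume eq: "z2 = z3"
    show False
    proof (cases "z2 = u")
      case True
      then have "b2 = v" "b3 = v" using y2(3) y3(3) eq unfolding z2_def z3_def by auto
      then show False using d by simp
    next
      case False
      then have "z2 \<in> set P2 - {u,v}" using y2(1,2) unfolding z2_def by simp
      moreover have "z2 \<in> set P3" using eq y3(1) unfolding z3_def by simp
      ultimately show False using D23 by blast
    qed
  qed
  have zv: "z1 \<noteq> v" "z2 \<noteq> v" "z3 \<noteq> v" using y1(2) y2(2) y3(2) unfolding z1_def z2_def z3_def by auto
  have incv: "incident A v = {{z1,v},{z2,v},{z3,v}}"
  proof (rule card3_eq)
    show "finite (incident A v)" using finite_incident[OF finA'] .
    show "card (incident A v) = 3" using dv unfolding deg_def .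
    show "{z1,v} \<in> incident A v" using y1(4) f1(5) unfolding z1_def incident_def by auto
    show "{z2,v} \<in> incident A v" using y2(4) f2(5) unfolding z2_def incident_def by auto
    show "{z3,v} \<in> incident A v" using y3(4) f3(5) unfolding z3_def incident_def by auto
    show "{z1,v} \<noteq> {z2,v}" using z12 zv by (auto simp: doubleton_eq_iff)
    show "{z1,v} \<noteq> {z3,v}" using z13 zv by (auto simp: doubleton_eq_iff)
    show "{z2,v} \<noteq> {z3,v}" using z23 zv by (auto simp: doubleton_eq_iff)
  qed
  have h1: "\<forall>x\<in>X. incident A x \<subseteq> L"
  proof
    fix x assume x: "x \<in> X"
    show "incident A x \<subseteq> L"
    proof (cases "x = u")
      case True
      have "{u,b1} \<in> L" "{u,b2} \<in> L" "{u,b3} \<in> L"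
        using hd_edge_in[OF f1(2)] hd_edge_in[OF f2(2)] hd_edge_in[OF f3(2)] f1(3,4) f2(3,4) f3(3,4)
        unfolding L_def by auto
      then show ?thesis using incu True by auto
    next
      case False
      show ?thesis
      proof (cases "x = v")
        case True
        then show ?thesis using incv y1(4) y2(4) y3(4) unfolding L_def z1_def z2_def z3_def by auto
      next
        case False2: False
        have "x \<in> set P1 \<or> x \<in> set P2 \<or> x \<in> set P3" using x unfolding X_def by auto
        then show ?thesis
        proof (elim disjE)
          assume "x \<in> set P1" then show ?thesis using wk_inner[OF w1, of x] False False2 l1 unfolding L_def by auto
        next
          assume "x \<in> set P2" then show ?thesis using wk_inner[OF w2, of x] False False2 l2 unfolding L_def by auto
        next
          assume "x \<in> set P3" then show ?thesis using wk_inner[OF w3, of x] False False2 l3 unfolding L_def by auto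
        qed
      qed
    qed
  qed
  have h2: "\<forall>e\<in>L. e \<subseteq> X" unfolding L_def X_def using path_edges_subset by blast
  have h3: "\<forall>x\<in>X. (u, x) \<in> (adj_rel L)\<^sup>*"
  proof
    fix x assume x: "x \<in> X"
    have s1: "path_edges P1 \<subseteq> L" and s2: "path_edges P2 \<subseteq> L" and s3: "path_edges P3 \<subseteq> L" unfolding L_def by auto
    show "(u, x) \<in> (adj_rel L)\<^sup>*"
      using x path_reach_mem[OF s1, of x] path_reach_mem[OF s2, of x] path_reach_mem[OF s3, of x] f1(3) f2(3) f3(3)
      unfolding X_def by auto
  qed
  have cl: "comp_verts A u = X" "comp_edges A u = L"
    using comp_closure[OF LA uX h1 h2 h3 ne_edges[OF AE]] by auto
  have p1: "is_path L P1" using f1(1) ne1 unfolding is_path_def L_def by auto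
  have p2: "is_path L P2" using f2(1) ne2 unfolding is_path_def L_def by auto
  have p3: "is_path L P3" using f3(1) ne3 unfolding is_path_def L_def by auto
  show ?thesis unfolding theta_graph_def cl
    using uv p1 p2 p3 f1(3) f2(3) f3(3) l1 l2 l3 N12 N13 N23 I12 I13 I23 X_def L_def by blast
qed

end


context cgraph begin

lemma pe_sub_ce: "path_edges c \<subseteq> cycle_edges c" unfolding cycle_edges_def by auto

lemma caseD:
  assumes s: "(A,u,v) \<in> S" and f: "full A u v"
    and w1: "wk A u v b p1" and z: "last p1 \<noteq> v"
    and w3: "wk A u v c P"
    and incu: "incident A u = {{u,b},{u,last p1},{u,c}}"
    and d: "b \<noteq> last p1" "c \<noteq> b" "c \<noteq> last p1"
  shows "dumbbell_graph (comp_verts A u) (comp_edges A u)"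
proof -
  note pr = state_profile[OF s]
  have AE: "A \<subseteq> E" using pr(1) .
  have finA': "finite A" using finA[OF AE] .
  have uv: "u \<noteq> v" using f pr(5) unfolding full_def by auto
  have dv: "deg A v = 3" using f unfolding full_def by simp
  note f1 = wk_facts[OF w1] and f3 = wk_facts[OF w3]
  have ne1: "p1 \<noteq> []" and ne3: "P \<noteq> []" using f1(2) f3(2) by auto
  define zz where "zz = last p1"
  have zf: "3 \<le> length p1" "zz \<noteq> b" "{u,zz} \<in> A" "incident A zz = {{p1!(length p1 - 2), zz}, {u,zz}}"
    using f1(7) z unfolding zz_def by auto
  have incu': "incident A u = {{u,b},{u,zz},{u,c}}" using incu zz_def by simp
  have ce1: "cycle_edges p1 = insert {zz,u} (path_edges p1)" unfolding cycle_edges_def zz_def using f1(3) by simp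
  have zuA: "{zz,u} \<in> A" using zf(3) by (simp add: insert_commute)
  have cyc1: "is_cycle A p1" unfolding is_cycle_def using zf(1) f1(1) ce1 f1(5) zuA by auto
  have inc1: "incident A x \<subseteq> cycle_edges p1" if x: "x \<in> set p1" "x \<noteq> u" for x
  proof (cases "x = zz")
    case True
    have "{p1!(length p1 - 2), zz} \<in> path_edges p1" using last_edge_in[OF f1(2)] zz_def by simp
    then show ?thesis using True zf(4) ce1 by (auto simp: insert_commute)
  next
    case False
    then show ?thesis using wk_inner[OF w1 x] zz_def ce1 by auto
  qed
  have v1: "v \<notin> set p1"
  proof
    assume "v \<in> set p1"
    then show False using wk_inner[OF w1, of v] uv z by auto
  qed
  define Y1 where "Y1 = set p1 - {u}"
  have uP: "P!0 = u" using f3(3) ne3 by (simp add: hd_conv_nth)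
  have ubA: "{u,b} \<in> A" using incu' unfolding incident_def by auto
  then have "{u,b} \<in> E" using AE by auto
  then have bu: "b \<noteq> u" using edge_neq[of u b] by auto
  have bY1: "b \<in> Y1" unfolding Y1_def using f1(4) f1(2) bu by (metis DiffI Suc_1 Suc_le_lessD nth_mem singletonD)
  have zu: "zz \<noteq> u" using last_neq_hd[OF f1(1) f1(2)] f1(3) zz_def by simp
  have zY1: "zz \<in> Y1" unfolding Y1_def using zu zz_def ne1 by simp
  have cA: "{u,c} \<in> A" using incu' unfolding incident_def by auto
  have av: "P!i \<notin> Y1" if i: "1 \<le> i" "i < length P" for i
  proof (rule avoid_lemma[of 1 P Y1 i])
    fix j assume j: "1 \<le> j" "Suc j < length P" "P!Suc j \<in> Y1"
    have e: "{P!j, P!Suc j} \<in> A" using path_edge_in[OF j(2)] f3(5) by auto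
    have "{P!j, P!Suc j} \<in> cycle_edges p1" using inc1[of "P!Suc j"] j(3) e unfolding Y1_def incident_def by auto
    then have pj: "P!j \<in> set p1" using cycle_edges_sub[OF ne1] by blast
    have "P!j \<noteq> u"
    proof
      assume "P!j = u"
      then have "P!j = P!0" using uP by simp
      then show False using nth_eq_iff_index_eq[OF f3(1), of j 0] j ne3 by auto
    qed
    then show "P!j \<in> Y1" using pj unfolding Y1_def by simp
  next
    show "P!1 \<notin> Y1"
    proof
      assume cY: "P!1 \<in> Y1"
      then have "c \<in> set p1" "c \<noteq> u" using f3(4) unfolding Y1_def by auto
      then have "{u,c} \<in> cycle_edges p1" using inc1[of c] cA unfolding incident_def by auto
      then have "{u,c} = {zz,u} \<or> {u,c} \<in> path_edges p1" using ce1 by simp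
      then show False
      proof
        assume "{u,c} = {zz,u}"
        then show False using d(3) zz_def zu by (auto simp: doubleton_eq_iff)
      next
        assume "{u,c} \<in> path_edges p1"
        then have "{u,c} = {hd p1, p1!1}" using hd_edge[OF f1(1) f1(2)] f1(3) by simp
        then show False using f1(3,4) d(2) by (auto simp: doubleton_eq_iff)
      qed
    qed
  qed (use i in simp_all)
  have lastP: "last P = v"
  proof (rule ccontr)
    assume nl: "last P \<noteq> v"
    then have lf: "{u, last P} \<in> A" "last P \<noteq> c" using f3(7) by auto
    then have "{u, last P} \<in> incident A u" unfolding incident_def by simp
    then have "last P = b \<or> last P = zz \<or> last P = c" using incu' by (auto simp: doubleton_eq_iff)
    then have "last P \<in> Y1" using lf(2) bY1 zY1 by auto
    moreover have "last P = P!(length P - 1)" using ne3 by (simp add: last_conv_nth)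
    moreover have "1 \<le> length P - 1" "length P - 1 < length P" using f3(2) by auto
    ultimately show False using av by metis
  qed
  have u1: "u \<in> set p1" using hd_in_set[OF ne1] f1(3) by simp
  have u3: "u \<in> set P" using hd_in_set[OF ne3] f3(3) by simp
  have vP: "v \<in> set P" using last_in_set[OF ne3] lastP by simp
  have IP1: "set P \<inter> set p1 = {u}"
  proof
    show "set P \<inter> set p1 \<subseteq> {u}"
    proof
      fix x assume x: "x \<in> set P \<inter> set p1"
      then obtain i where i: "i < length P" "P!i = x" by (auto simp: in_set_conv_nth)
      show "x \<in> {u}"
      proof (cases "i = 0")
        case True then show ?thesis using i uP by simp
      next
        case False then show ?thesis using av[of i] i x unfolding Y1_def by auto
      qed
    qed
    show "{u} \<subseteq> set P \<inter> set p1" using u1 u3 by simp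
  qed
  note y3 = wk_pre_last[OF w3 lastP]
  define x0 where "x0 = P!(length P - 2)"
  define Y where "Y = (set p1 \<union> set P) - {v}"
  have e0: "{x0, v} \<in> A" using y3(4) f3(5) x0_def by auto
  have x0Y: "x0 \<in> Y" using y3(1,2) x0_def unfolding Y_def by simp
  have vY: "v \<notin> Y" unfolding Y_def by simp
  have closedY: "y \<in> Y \<or> (y = v \<and> x = x0)" if x: "x \<in> Y" and xy: "{x,y} \<in> A" for x y
  proof (cases "x \<in> set p1")
    case True
    show ?thesis
    proof (cases "x = u")
      case True
      then have "{u,y} \<in> incident A u" using xy unfolding incident_def by simp
      then have "y = b \<or> y = zz \<or> y = c" using incu' by (auto simp: doubleton_eq_iff)
      then show ?thesis
      proof (elim disjE)
        assume "y = b" then show ?thesis using bY1 v1 unfolding Y1_def Y_def by auto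
      next
        assume "y = zz" then show ?thesis using zY1 v1 unfolding Y1_def Y_def by auto
      next
        assume yc: "y = c"
        show ?thesis
        proof (cases "c = v")
          case True
          then have "P!1 = P!(length P - 1)" using f3(4) lastP ne3 by (simp add: last_conv_nth)
          then have "1 = length P - 1" using nth_eq_iff_index_eq[OF f3(1), of 1 "length P - 1"] f3(2) by auto
          then have "length P = 2" by simp
          then have "x0 = u" using x0_def uP by simp
          then show ?thesis using yc True \<open>x = u\<close> by simp
        next
          case False
          have "c \<in> set P" using f3(4) f3(2) by (metis Suc_1 Suc_le_lessD nth_mem)
          then show ?thesis using yc False unfolding Y_def by simp
        qed
      qed
    next
      case False
      then have "{x,y} \<in> cycle_edges p1" using inc1[OF True] xy unfolding incident_def by auto
      then have "y \<in> set p1" using cycle_edges_sub[OF ne1] by blast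
      then show ?thesis using v1 unfolding Y_def by auto
    qed
  next
    case False
    then have xP: "x \<in> set P" "x \<noteq> v" using x unfolding Y_def by auto
    have xu: "x \<noteq> u" using False u1 by auto
    have "incident A x \<subseteq> path_edges P" using wk_inner[OF w3 xP(1) xu] xP(2) lastP by simp
    then have xyP: "{x,y} \<in> path_edges P" using xy unfolding incident_def by auto
    then have yP: "y \<in> set P" using path_edges_subset by blast
    show ?thesis
    proof (cases "y = v")
      case True
      have "{x,y} = {P!(length P - 2), last P}" using last_edge[OF f3(1) f3(2) xyP] True lastP by simp
      then have "x = x0" using True lastP xP(2) x0_def by (auto simp: doubleton_eq_iff)
      then show ?thesis using True by simp
    next
      case False then show ?thesis using yP unfolding Y_def by simp
    qed
  qed
  have uY: "u \<in> Y" using u1 uv unfolding Y_def by simp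
  have deg2Y: "deg A x = 2" if "x \<in> V" "x \<notin> Y" "x \<noteq> v" for x
    using pr(4)[OF that(1)] that uY by auto
  obtain C2 where c2: "is_cycle A C2" "last C2 = v" "set C2 \<inter> Y = {}" "incident A v \<subseteq> insert {x0,v} (cycle_edges C2)"
    "\<forall>x\<in>set C2. x \<noteq> v \<longrightarrow> incident A x \<subseteq> cycle_edges C2"
    using cyc3[OF AE dv e0 x0Y vY closedY deg2Y] by blast
  have ne2: "C2 \<noteq> []" using c2(1) unfolding is_cycle_def by auto
  have vC2: "v \<in> set C2" using last_in_set[OF ne2] c2(2) by simp
  have D12: "set p1 \<inter> set C2 = {}" using c2(3) v1 unfolding Y_def by auto
  have PC2: "set P \<inter> set C2 = {v}" using c2(3) vP vC2 unfolding Y_def by auto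
  define X where "X = set p1 \<union> set C2 \<union> set P"
  define L where "L = cycle_edges p1 \<union> cycle_edges C2 \<union> path_edges P"
  have LA: "L \<subseteq> A" unfolding L_def using cyc1 c2(1) f3(5) unfolding is_cycle_def by auto
  have uX: "u \<in> X" unfolding X_def using u1 by simp
  have s1: "cycle_edges p1 \<subseteq> L" and s2: "cycle_edges C2 \<subseteq> L" and s3: "path_edges P \<subseteq> L" unfolding L_def by auto
  have h1: "\<forall>x\<in>X. incident A x \<subseteq> L"
  proof
    fix x assume x: "x \<in> X"
    show "incident A x \<subseteq> L"
    proof (cases "x = u")
      case True
      have "{u,b} \<in> L" using hd_edge_in[OF f1(2)] f1(3,4) pe_sub_ce s1 by auto
      moreover have "{u,zz} \<in> L" using ce1 s1 by (auto simp: insert_commute)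
      moreover have "{u,c} \<in> L" using hd_edge_in[OF f3(2)] f3(3,4) s3 by auto
      ultimately show ?thesis using incu' True by auto
    next
      case False
      show ?thesis
      proof (cases "x = v")
        case True
        then show ?thesis using c2(4) y3(4) x0_def s2 s3 by auto
      next
        case False2: False
        have "x \<in> set p1 \<or> x \<in> set C2 \<or> x \<in> set P" using x unfolding X_def by auto
        then show ?thesis
        proof (elim disjE)
          assume "x \<in> set p1" then show ?thesis using inc1 False s1 by blast
        next
          assume "x \<in> set C2" then show ?thesis using c2(5) False2 s2 by blast
        next
          assume "x \<in> set P" then show ?thesis using wk_inner[OF w3, of x] False False2 lastP s3 by auto
        qed
      qed
    qed
  qed
  have h2: "\<forall>e\<in>L. e \<subseteq> X" unfolding L_def X_def using cycle_edges_sub[OF ne1] cycle_edges_sub[OF ne2] path_edges_subset by blast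
  have h3: "\<forall>x\<in>X. (u, x) \<in> (adj_rel L)\<^sup>*"
  proof
    fix x assume x: "x \<in> X"
    have uv': "(u, v) \<in> (adj_rel L)\<^sup>*" using path_reach_mem[OF s3 vP] f3(3) by simp
    have "x \<in> set p1 \<or> x \<in> set C2 \<or> x \<in> set P" using x unfolding X_def by auto
    then show "(u, x) \<in> (adj_rel L)\<^sup>*"
    proof (elim disjE)
      assume "x \<in> set p1" then show ?thesis using path_reach_mem[of p1 L x] pe_sub_ce s1 f1(3) by blast
    next
      assume "x \<in> set C2"
      then have "(v, x) \<in> (adj_rel L)\<^sup>*" using cycle_reach[OF s2] c2(2) by metis
      then show ?thesis using uv' rtrancl_trans by metis
    next
      assume "x \<in> set P" then show ?thesis using path_reach_mem[OF s3] f3(3) by metis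
    qed
  qed
  have cl: "comp_verts A u = X" "comp_edges A u = L"
    using comp_closure[OF LA uX h1 h2 h3 ne_edges[OF AE]] by auto
  have ic1: "is_cycle L p1" using is_cycle_sub[OF cyc1 s1] .
  have ic2: "is_cycle L C2" using is_cycle_sub[OF c2(1) s2] .
  have ip: "is_path L P" using f3(1) ne3 s3 unfolding is_path_def by auto
  have hP: "hd P = u" using f3(3) .
  show ?thesis unfolding dumbbell_graph_def cl
    using ic1 ic2 D12 ip f3(2) IP1 PC2 hP lastP X_def L_def by blast
qed

end


context cgraph begin

lemma full_ThetaD:
  assumes s: "(A,u,v) \<in> S" and f: "full A u v"
  shows "(A,u,v) \<in> class_Theta V E \<union> class_D V E"
proof -
  note pr = state_profile[OF s]
  have AE: "A \<subseteq> E" using pr(1) .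
  have finA': "finite A" using finA[OF AE] .
  have du: "deg A u = 3" using f unfolding full_def by simp
  obtain e1 e2 e3 where ee: "incident A u = {e1,e2,e3}" "e1 \<noteq> e2" "e2 \<noteq> e3" "e1 \<noteq> e3"
    using du unfolding deg_def card_3_iff by blast
  have eA: "e1 \<in> A" "u \<in> e1" "e2 \<in> A" "u \<in> e2" "e3 \<in> A" "u \<in> e3" using ee(1) unfolding incident_def by blast+
  obtain b1 where b1: "e1 = {u,b1}" using edge_at eA(1,2) AE by blast
  obtain b2 where b2: "e2 = {u,b2}" using edge_at eA(3,4) AE by blast
  obtain b3 where b3: "e3 = {u,b3}" using edge_at eA(5,6) AE by blast
  have d: "b1 \<noteq> b2" "b1 \<noteq> b3" "b2 \<noteq> b3" using ee b1 b2 b3 by auto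
  have incu: "incident A u = {{u,b1},{u,b2},{u,b3}}" using ee(1) b1 b2 b3 by simp
  have nb: "x = b1 \<or> x = b2 \<or> x = b3" if "{u,x} \<in> A" for x
  proof -
    have "{u,x} \<in> incident A u" using that unfolding incident_def by simp
    then show ?thesis using incu by (auto simp: doubleton_eq_iff)
  qed
  have bA: "{u,b1} \<in> A" "{u,b2} \<in> A" "{u,b3} \<in> A" using eA b1 b2 b3 by auto
  have "\<forall>b. \<exists>p. {u,b} \<in> A \<longrightarrow> wk A u v b p" using walk33[OF s f] by blast
  then obtain pw where pw: "\<forall>b. {u,b} \<in> A \<longrightarrow> wk A u v b (pw b)" using choice by metis
  have gen: "dumbbell_graph (comp_verts A u) (comp_edges A u)" if bb: "{u,b} \<in> A" and lb: "last (pw b) \<noteq> v" for b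
  proof -
    have wb: "wk A u v b (pw b)" using pw bb by blast
    note fb = wk_facts[OF wb]
    have zf: "last (pw b) \<noteq> b" "{u, last (pw b)} \<in> A" using fb(7) lb by auto
    have bm: "b = b1 \<or> b = b2 \<or> b = b3" using nb[OF bb] .
    have zm: "last (pw b) = b1 \<or> last (pw b) = b2 \<or> last (pw b) = b3" using nb[OF zf(2)] .
    obtain c where c: "c = b1 \<or> c = b2 \<or> c = b3" "c \<noteq> b" "c \<noteq> last (pw b)"
      using bm zm d zf(1) by blast
    have cA: "{u,c} \<in> A" using c(1) bA by blast
    have wc: "wk A u v c (pw c)" using pw cA by blast
    have incu': "incident A u = {{u,b},{u,last (pw b)},{u,c}}"
    proof (rule card3_eq)
      show "finite (incident A u)" using finite_incident[OF finA'] .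
      show "card (incident A u) = 3" using du unfolding deg_def .
      show "{u,b} \<in> incident A u" "{u,last (pw b)} \<in> incident A u" "{u,c} \<in> incident A u"
        using bb zf(2) cA unfolding incident_def by auto
      show "{u,b} \<noteq> {u,last (pw b)}" using zf(1) by (auto simp: doubleton_eq_iff)
      show "{u,b} \<noteq> {u,c}" using c(2) by (auto simp: doubleton_eq_iff)
      show "{u,last (pw b)} \<noteq> {u,c}" using c(3) by (auto simp: doubleton_eq_iff)
    qed
    show ?thesis using caseD[OF s f wb lb wc incu' zf(1)[symmetric] c(2) c(3)] .
  qed
  show ?thesis
  proof (cases "last (pw b1) = v \<and> last (pw b2) = v \<and> last (pw b3) = v")
    case True
    have w1: "wk A u v b1 (pw b1)" and w2: "wk A u v b2 (pw b2)" and w3: "wk A u v b3 (pw b3)" using pw bA by blast+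
    have "theta_graph (comp_verts A u) (comp_edges A u)"
      using caseTheta[OF s f w1 w2 w3 _ _ _ incu d] True by blast
    then show ?thesis using s unfolding class_Theta_def S_def by simp
  next
    case False
    then have "dumbbell_graph (comp_verts A u) (comp_edges A u)" using gen bA by blast
    then show ?thesis using s unfolding class_D_def S_def by simp
  qed
qed

lemma classify:
  assumes "(A,u,v) \<in> S"
  shows "full A u v \<Longrightarrow> (A,u,v) \<notin> class_E V E \<union> class_T V E \<and> (A,u,v) \<in> class_Theta V E \<union> class_D V E"
    "\<not> full A u v \<Longrightarrow> (A,u,v) \<in> class_E V E \<union> class_T V E"
proof -
  show "full A u v \<Longrightarrow> (A,u,v) \<notin> class_E V E \<union> class_T V E \<and> (A,u,v) \<in> class_Theta V E \<union> class_D V E"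
    using full_not_ET[OF assms] full_ThetaD[OF assms] by blast
  show "(A,u,v) \<in> class_E V E \<union> class_T V E" if nf: "\<not> full A u v"
  proof (cases "u = v")
    case True then show ?thesis using classE_mem assms by blast
  next
    case False then show ?thesis using classT_mem[OF assms nf] by blast
  qed
qed

end


context cgraph begin

lemma mp_nonneg: "(n::real) > 0 \<Longrightarrow> move_prob V E n s e \<ge> 0"
  unfolding move_prob_def by (cases s) auto

lemma sd_single: "sym_diff A {e} = (if e \<in> A then A - {e} else insert e A)"
  unfolding sym_diff_def by auto

lemma tp_pos_U:
  assumes n: "(n::real) > 0" and e: "{u,w} \<in> E" and mp: "move_prob V E n (A,u,v) {u,w} > 0"
  shows "trans_prob V E n (A,u,v) (sym_diff A {{u,w}}, w, v) > 0"
proof -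
  let ?t = "(sym_diff A {{u,w}}, w, v)"
  define g where "g u' = (if ?t = (sym_diff A {{u, u'}}, u', v) then move_prob V E n (A,u,v) {u, u'} else 0)" for u'
  define h where "h v' = (if ?t = (sym_diff A {{v, v'}}, u, v') then move_prob V E n (A,u,v) {v, v'} else 0)" for v'
  have fin1: "finite {u'. {u,u'} \<in> E}" using finite_subset[OF _ finV, of "{u'. {u,u'} \<in> E}"] edge_in_V by blast
  have g0: "g x \<ge> 0" for x unfolding g_def using mp_nonneg[OF n] by simp
  have h0: "h x \<ge> 0" for x unfolding h_def using mp_nonneg[OF n] by simp
  have "g w \<le> sum g {u'. {u,u'} \<in> E}" using member_le_sum[of w _ g] e g0 fin1 by simp
  moreover have "g w > 0" unfolding g_def using mp by simp
  moreover have "sum h {v'. {v,v'} \<in> E} \<ge> 0" using h0 by (simp add: sum_nonneg)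
  moreover have "trans_prob V E n (A,u,v) ?t = sum g {u'. {u,u'} \<in> E} + sum h {v'. {v,v'} \<in> E}"
    unfolding trans_prob_def g_def h_def by simp
  ultimately show ?thesis by linarith
qed

lemma tp_pos_V:
  assumes n: "(n::real) > 0" and e: "{v,w} \<in> E" and mp: "move_prob V E n (A,u,v) {v,w} > 0"
  shows "trans_prob V E n (A,u,v) (sym_diff A {{v,w}}, u, w) > 0"
proof -
  let ?t = "(sym_diff A {{v,w}}, u, w)"
  define g where "g u' = (if ?t = (sym_diff A {{u, u'}}, u', v) then move_prob V E n (A,u,v) {u, u'} else 0)" for u'
  define h where "h v' = (if ?t = (sym_diff A {{v, v'}}, u, v') then move_prob V E n (A,u,v) {v, v'} else 0)" for v'
  have fin1: "finite {v'. {v,v'} \<in> E}" using finite_subset[OF _ finV, of "{v'. {v,v'} \<in> E}"] edge_in_V by blast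
  have g0: "g x \<ge> 0" for x unfolding g_def using mp_nonneg[OF n] by simp
  have h0: "h x \<ge> 0" for x unfolding h_def using mp_nonneg[OF n] by simp
  have "h w \<le> sum h {v'. {v,v'} \<in> E}" using member_le_sum[of w _ h] e h0 fin1 by simp
  moreover have "h w > 0" unfolding h_def using mp by simp
  moreover have "sum g {u'. {u,u'} \<in> E} \<ge> 0" using g0 by (simp add: sum_nonneg)
  moreover have "trans_prob V E n (A,u,v) ?t = sum g {u'. {u,u'} \<in> E} + sum h {v'. {v,v'} \<in> E}"
    unfolding trans_prob_def g_def h_def by simp
  ultimately show ?thesis by linarith
qed

lemma mp_add: "(A,u,v) \<in> class_E V E \<union> class_T V E \<Longrightarrow> e \<notin> A \<Longrightarrow> move_prob V E n (A,u,v) e > 0"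
  unfolding move_prob_def by simp

lemma mp_rem: "(n::real) > 0 \<Longrightarrow> (A,u,v) \<notin> class_E V E \<union> class_T V E \<Longrightarrow> (A,u,v) \<in> class_Theta V E \<union> class_D V E
  \<Longrightarrow> e \<in> A \<Longrightarrow> move_prob V E n (A,u,v) e > 0"
  unfolding move_prob_def by auto

lemma mv_pos:
  assumes n: "(n::real) > 0"
  shows "(s,t) \<in> mv \<Longrightarrow> trans_prob V E n s t > 0"
proof -
  have "((A0,u0,v0),(A1,u1,v1)) \<in> mv \<Longrightarrow> trans_prob V E n (A0,u0,v0) (A1,u1,v1) > 0" for A0 u0 v0 A1 u1 v1
  proof (induction rule: mv.induct)
    case (addU A u v w)
    have "move_prob V E n (A,u,v) {u,w} > 0" using mp_add classify(2)[OF addU(1) addU(2)] addU(4) by blast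
    then have "trans_prob V E n (A,u,v) (sym_diff A {{u,w}}, w, v) > 0" by (rule tp_pos_U[OF n addU(3)])
    moreover have "sym_diff A {{u,w}} = insert {u,w} A" using sd_single[of A "{u,w}"] addU(4) by simp
    ultimately show ?case by simp
  next
    case (remU A u v w)
    have eE: "{u,w} \<in> E" using remU(3) state_profile(1)[OF remU(1)] by auto
    have "move_prob V E n (A,u,v) {u,w} > 0" using mp_rem[OF n] classify(1)[OF remU(1) remU(2)] remU(3) by blast
    then have "trans_prob V E n (A,u,v) (sym_diff A {{u,w}}, w, v) > 0" by (rule tp_pos_U[OF n eE])
    moreover have "sym_diff A {{u,w}} = A - {{u,w}}" using sd_single[of A "{u,w}"] remU(3) by simp
    ultimately show ?case by simp
  next
    case (addV A u v w)
    have "move_prob V E n (A,u,v) {v,w} > 0" using mp_add classify(2)[OF addV(1) addV(2)] addV(4) by blast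
    then have "trans_prob V E n (A,u,v) (sym_diff A {{v,w}}, u, w) > 0" by (rule tp_pos_V[OF n addV(3)])
    moreover have "sym_diff A {{v,w}} = insert {v,w} A" using sd_single[of A "{v,w}"] addV(4) by simp
    ultimately show ?case by simp
  next
    case (remV A u v w)
    have eE: "{v,w} \<in> E" using remV(3) state_profile(1)[OF remV(1)] by auto
    have "move_prob V E n (A,u,v) {v,w} > 0" using mp_rem[OF n] classify(1)[OF remV(1) remV(2)] remV(3) by blast
    then have "trans_prob V E n (A,u,v) (sym_diff A {{v,w}}, u, w) > 0" by (rule tp_pos_V[OF n eE])
    moreover have "sym_diff A {{v,w}} = A - {{v,w}}" using sd_single[of A "{v,w}"] remV(3) by simp
    ultimately show ?case by simp
  qed
  then show "(s,t) \<in> mv \<Longrightarrow> trans_prob V E n s t > 0" by (cases s; cases t) auto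
qed

lemma irreducible:
  assumes n: "(n::real) > 0" and conn: "connected_graph V E" and bip: "bipartite V E"
  shows "irreducible_chain S (trans_prob V E n)"
proof -
  let ?R = "{(x, y). x \<in> S \<and> y \<in> S \<and> trans_prob V E n x y > 0}"
  have mvR: "mv \<subseteq> ?R" using mv_pos[OF n] mv_S by auto
  show ?thesis unfolding irreducible_chain_def
  proof (intro ballI)
    fix s s' assume s: "s \<in> S" and s': "s' \<in> S"
    obtain A u v where suv: "s = (A,u,v)" by (cases s) auto
    note p = state_profile[of A u v]
    have uV: "u \<in> V" using p s suv by simp
    obtain Fs where Fs: "twofactor Fs"
    proof -
      have "\<exists>Fs. twofactor Fs"
      proof (cases "u = v \<or> full A u v")
        case True
        then show ?thesis
        proof
          assume "u = v" then show ?thesis using E_state_twofactor s suv by blast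
        next
          assume "full A u v" then show ?thesis using twofactor_exists[OF bip] s suv by blast
        qed
      next
        case False
        have sS: "(A,u,v) \<in> S" using s suv by simp
        have nf: "\<not> full A u v" "u \<noteq> v" using False by auto
        then have "deg A u = 1 \<or> deg A v = 1" using state_profile(6)[OF sS] unfolding full_def by auto
        then show ?thesis
        proof
          assume "deg A u = 1"
          then obtain y where y: "{u,y} \<in> E" "{u,y} \<notin> A" using deg1_non_edge state_profile[OF sS] by metis
          show ?thesis using twofactor_exists[OF bip add_result[OF sS nf(1) y]] by blast
        next
          assume "deg A v = 1"
          then obtain y where y: "{v,y} \<in> E" "{v,y} \<notin> A" using deg1_non_edge state_profile[OF sS] by metis
          show ?thesis using twofactor_exists[OF bip add_resultV[OF sS nf(1) y]] by blast
        qed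
      qed
      then show ?thesis using that by blast
    qed
    have r1: "(s, (Fs,u,u)) \<in> mv\<^sup>*" using reach_base[OF Fs conn uV s] .
    have r2: "(s', (Fs,u,u)) \<in> mv\<^sup>*" using reach_base[OF Fs conn uV s'] .
    have "(s, s') \<in> mv\<^sup>*" using r1 mv_rtrancl_sym[OF r2] by (rule rtrancl_trans)
    then show "(s, s') \<in> ?R\<^sup>*" using rtrancl_mono[OF mvR] by blast
  qed
qed

end

theorem proposition2:
  fixes V :: "'a set" and E :: "'a set set" and n :: real
  assumes "simple_graph V E"
    and "connected_graph V E"
    and "bipartite V E"
    and "cubic V E"
    and "n > 0"
  shows "irreducible_chain (states V E) (trans_prob V E n)"
proof -
  interpret cgraph V E using assms(1,4) by unfold_locales
  show ?thesis using irreducible[OF assms(5) assms(2) assms(3)] unfolding S_def .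
qed


end
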